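(* Let $\mathcal{A}$ be a nontrivial simplicial arrangement in $\mathbb{R}^n$ and let $\mathsf{h}$ be a closed halfspace that is generic with respect to $\mathcal{A}$. Let $\Sigma(\mathsf{h})$ be the set of faces of $\mathcal{A}$ contained in $\mathsf{h}$, let $f(\Sigma(\mathsf{h}),t)=\sum_{F\in\Sigma(\mathsf{h})} t^{\dim F}$ and $h(\Sigma(\mathsf{h}),t)=(1-t)^n f\big(\Sigma(\mathsf{h}),\tfrac{t}{1-t}\big)$. Then \[P_{\mathcal{A}}(z)=z^n\, h\big(\Sigma(\mathsf{h}),\tfrac{1}{z}\big).\]
   Context: A finite real linear (central) hyperplane arrangement $\mathcal{A}$ in $\mathbb{R}^n$ is a finite set of linear hyperplanes; it is nontrivial if it contains at least one hyperplane. Flats are intersections of subsets of hyperplanes of $\mathcal{A}$; they form a lattice $\mathcal{L}[\mathcal{A}]$ ordered by inclusion, with minimum $\bot=\bigcap\mathcal{A}$ and maximum $\mathbb{R}^n$. The Primitive Eulerian polynomial is $P_{\mathcal{A}}(z)=\sum_{\mathrm{X}\in\mathcal{L}[\mathcal{A}]}|\mu(\bot,\mathrm{X})|(z-1)^{\operatorname{codim}(\mathrm{X})}$, where $\mu$ is the Möbius function of $\mathcal{L}[\mathcal{A}]$. Regions are the closures of connected components of $\mathbb{R}^n\setminus\bigcup\mathcal{A}$; faces are the faces of regions (polyhedral cones), forming a complete fan whose minimal face is $\bot$. The rank of $\mathcal{A}$ is the rank of $\mathcal{L}[\mathcal{A}]$. $\mathcal{A}$ is simplicial if every region contains exactly $\operatorname{rank}(\mathcal{A})$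 faces of rank $1$ (of dimension $\dim\bot+1$). A hyperplane (not in $\mathcal{A}$) is generic with respect to $\mathcal{A}$ if it contains $\bot$ and contains no other flat of $\mathcal{A}$; a halfspace is generic if its bounding hyperplane is. Here $\dim F$ is the dimension of the face $F$ as a cone. *)

theory Defs
  imports "HOL-Analysis.Analysis"
begin

definition lin_hyperplane :: "'a::euclidean_space set \<Rightarrow> bool" where
  "lin_hyperplane H \<longleftrightarrow> (\<exists>a. a \<noteq> 0 \<and> H = {x. a \<bullet> x = 0})"

definition arrangement :: "'a::euclidean_space set set \<Rightarrow> bool" where
  "arrangement A \<longleftrightarrow> finite A \<and> (\<forall>H\<in>A. lin_hyperplane H)"

text \<open>Flats: intersections of subsets of the arrangement (the empty intersection is the whole space).\<close>
definition flats :: "'a::euclidean_space set set \<Rightarrow> 'a set set" where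
  "flats A = {\<Inter>B | B. B \<subseteq> A}"

definition bot_flat :: "'a::euclidean_space set set \<Rightarrow> 'a set" where
  "bot_flat A = \<Inter>A"

definition codim :: "'a::euclidean_space set \<Rightarrow> nat" where
  "codim X = DIM('a) - dim X"

function mobius :: "'a set set \<Rightarrow> 'a set \<Rightarrow> 'a set \<Rightarrow> int" where
  "mobius L x y =
     (if finite L \<and> x \<in> L \<and> y \<in> L \<and> x \<subseteq> y then
        (if x = y then 1 else - (\<Sum>z\<in>{z\<in>L. x \<subseteq> z \<and> z \<subset> y}. mobius L x z))
      else 0)"
  by auto
termination
proof (relation "Wellfounded.measure (\<lambda>(L, x, y). card {w\<in>L. w \<subset> y})")
  show "wf (Wellfounded.measure (\<lambda>(L, x, y). card {w\<in>L. w \<subset> y}))" by simp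
next
  fix L :: "'a set set" and x y z
  assume h: "finite L \<and> x \<in> L \<and> y \<in> L \<and> x \<subseteq> y" "x \<noteq> y"
     and z: "z \<in> {z\<in>L. x \<subseteq> z \<and> z \<subset> y}"
  have "{w\<in>L. w \<subset> z} \<subset> {w\<in>L. w \<subset> y}" using z by auto
  then have "card {w\<in>L. w \<subset> z} < card {w\<in>L. w \<subset> y}"
    using h by (intro psubset_card_mono) auto
  then show "((L, x, z), L, x, y) \<in> Wellfounded.measure (\<lambda>(L, x, y). card {w\<in>L. w \<subset> y})" by simp
qed

declare mobius.simps [simp del]

definition lattice_rank :: "'a set set \<Rightarrow> nat" where
  "lattice_rank L = Max {length xs | xs. set xs \<subseteq> L \<and> sorted_wrt (\<subset>) xs} - 1"

definition arr_rank :: "'a::euclidean_space set set \<Rightarrow> nat" where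
  "arr_rank A = lattice_rank (flats A)"

definition prim_eulerian :: "'a::euclidean_space set set \<Rightarrow> real \<Rightarrow> real" where
  "prim_eulerian A z =
     (\<Sum>X\<in>flats A. real_of_int \<bar>mobius (flats A) (bot_flat A) X\<bar> * (z - 1) ^ codim X)"

definition regions :: "'a::euclidean_space set set \<Rightarrow> 'a set set" where
  "regions A = {closure (connected_component_set (- \<Union>A) x) | x. x \<notin> \<Union>A}"

definition faces :: "'a::euclidean_space set set \<Rightarrow> 'a set set" where
  "faces A = {F. \<exists>R\<in>regions A. F face_of R \<and> F \<noteq> {}}"

definition simplicial :: "'a::euclidean_space set set \<Rightarrow> bool" where
  "simplicial A \<longleftrightarrow>
     (\<forall>R\<in>regions A. card {F. F face_of R \<and> F \<noteq> {} \<and> dim F = dim (bot_flat A) + 1} = arr_rank A)"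

definition generic_hyperplane :: "'a::euclidean_space set set \<Rightarrow> 'a set \<Rightarrow> bool" where
  "generic_hyperplane A H \<longleftrightarrow>
     H \<notin> A \<and> bot_flat A \<subseteq> H \<and> (\<forall>X\<in>flats A. X \<subseteq> H \<longrightarrow> X = bot_flat A)"

definition generic_halfspace :: "'a::euclidean_space set set \<Rightarrow> 'a set \<Rightarrow> bool" where
  "generic_halfspace A h \<longleftrightarrow>
     (\<exists>a c. a \<noteq> 0 \<and> h = {x. a \<bullet> x \<ge> c} \<and> generic_hyperplane A {x. a \<bullet> x = c})"

definition faces_in :: "'a::euclidean_space set set \<Rightarrow> 'a set \<Rightarrow> 'a set set" where
  "faces_in A h = {F\<in>faces A. F \<subseteq> h}"

definition f_poly :: "'a::euclidean_space set set \<Rightarrow> real \<Rightarrow> real" where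
  "f_poly \<Sigma> t = (\<Sum>F\<in>\<Sigma>. t ^ dim F)"

definition h_poly :: "'a::euclidean_space set set \<Rightarrow> real \<Rightarrow> real" where
  "h_poly \<Sigma> t = (1 - t) ^ DIM('a) * f_poly \<Sigma> (t / (1 - t))"

end

theory Submission
  imports Defs
begin


definition cl :: "('a::euclidean_space set \<Rightarrow> 'a) \<Rightarrow> 'a set set \<Rightarrow> 'a set \<Rightarrow> 'a \<Rightarrow> 'a set" where
  "cl N B V x = {y\<in>V. \<forall>H\<in>B. sgn (N H \<bullet> y) = sgn (N H \<bullet> x)}"

definition cells :: "('a::euclidean_space set \<Rightarrow> 'a) \<Rightarrow> 'a set set \<Rightarrow> 'a set \<Rightarrow> 'a set set" where
  "cells N B V = cl N B V ` V"

definition Lsp :: "('a::euclidean_space set \<Rightarrow> 'a) \<Rightarrow> 'a set set \<Rightarrow> 'a set \<Rightarrow> 'a \<Rightarrow> 'a set" where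
  "Lsp N B V x = {y\<in>V. \<forall>H\<in>B. N H \<bullet> x = 0 \<longrightarrow> N H \<bullet> y = 0}"

lemma cl_self: "x \<in> V \<Longrightarrow> x \<in> cl N B V x"
  by (simp add: cl_def)

lemma cl_eq: "y \<in> cl N B V x \<Longrightarrow> cl N B V y = cl N B V x"
  by (auto simp: cl_def)

lemma sgn_comb:
  fixes p q u v :: real
  assumes "sgn p = s" "sgn q = s" "u \<ge> 0" "v \<ge> 0" "u + v = 1"
  shows "sgn (u * p + v * q) = s"
proof -
  consider "p > 0" | "p = 0" | "p < 0" by linarith
  then show ?thesis
  proof cases
    case 1 then have "q > 0" using assms by (metis sgn_pos sgn_greater)
    then have "u * p + v * q > 0" using 1 assms
      by (smt (verit) mult_nonneg_nonneg mult_pos_pos)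
    then show ?thesis using 1 assms by simp
  next
    case 2 then have "q = 0" using assms by (metis sgn_0_0)
    then show ?thesis using 2 assms by simp
  next
    case 3 then have "q < 0" using assms by (metis sgn_neg sgn_less)
    then have "u * p + v * q < 0" using 3 assms
      by (smt (verit) mult_nonneg_nonpos mult_pos_neg)
    then show ?thesis using 3 assms by simp
  qed
qed

lemma cl_convex: "subspace V \<Longrightarrow> convex (cl N B V x)"
  unfolding convex_def cl_def
  by (auto simp: inner_add_right subspace_add subspace_scale intro!: sgn_comb)

lemma finite_cells: "finite B \<Longrightarrow> finite (cells N B V)"
proof -
  assume fB: "finite B"
  let ?sv = "\<lambda>x. restrict (\<lambda>H. sgn (N H \<bullet> x)) B"
  let ?F = "\<lambda>s. {y\<in>V. ?sv y = s}"
  have "cells N B V \<subseteq> ?F ` (PiE B (\<lambda>_. {-1,0,1}))"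
  proof
    fix C assume "C \<in> cells N B V"
    then obtain x where x: "x \<in> V" "C = cl N B V x" by (auto simp: cells_def)
    have "C = ?F (?sv x)" using x by (auto simp: cl_def restrict_def fun_eq_iff)
    moreover have "?sv x \<in> PiE B (\<lambda>_. {-1,0,1})"
      by (auto simp: sgn_real_def)
    ultimately show "C \<in> ?F ` (PiE B (\<lambda>_. {-1,0,1}))" by blast
  qed
  moreover have "finite (PiE B (\<lambda>_. {-1::real,0,1}))" using fB by (simp add: finite_PiE)
  ultimately show ?thesis by (meson finite_surj)
qed

lemma perturb:
  assumes "finite B"
  shows "\<exists>e>0. \<forall>t. \<bar>t\<bar> < e \<longrightarrow> (\<forall>H\<in>B. N H \<bullet> x \<noteq> 0 \<longrightarrow> sgn (N H \<bullet> (x + t *\<^sub>R y)) = sgn (N H \<bullet> x))"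
proof -
  let ?S = "(\<lambda>H. \<bar>N H \<bullet> x\<bar> / (\<bar>N H \<bullet> y\<bar> + 1)) ` {H\<in>B. N H \<bullet> x \<noteq> 0}"
  define e where "e = Min (insert 1 ?S)"
  have fin: "finite (insert 1 ?S)" using assms by simp
  have epos: "e > 0" unfolding e_def using fin
    by (subst Min_gr_iff) auto
  have ele: "e \<le> \<bar>N H \<bullet> x\<bar> / (\<bar>N H \<bullet> y\<bar> + 1)" if "H \<in> B" "N H \<bullet> x \<noteq> 0" for H
    unfolding e_def using fin that by (intro Min_le) auto
  show ?thesis
  proof (intro exI[of _ e] conjI allI impI ballI epos)
    fix t H assume t: "\<bar>t\<bar> < e" and H: "H \<in> B" "N H \<bullet> x \<noteq> 0"
    have "\<bar>t\<bar> * (\<bar>N H \<bullet> y\<bar> + 1) < \<bar>N H \<bullet> x\<bar>"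
    proof -
      have "\<bar>t\<bar> * (\<bar>N H \<bullet> y\<bar> + 1) < e * (\<bar>N H \<bullet> y\<bar> + 1)"
        using t by (intro mult_strict_right_mono) auto
      also have "\<dots> \<le> \<bar>N H \<bullet> x\<bar>" using ele[OF H]
        by (simp add: pos_le_divide_eq)
      finally show ?thesis .
    qed
    moreover have "\<bar>t * (N H \<bullet> y)\<bar> \<le> \<bar>t\<bar> * (\<bar>N H \<bullet> y\<bar> + 1)"
      by (simp add: abs_mult mult_left_mono)
    ultimately have "\<bar>t * (N H \<bullet> y)\<bar> < \<bar>N H \<bullet> x\<bar>" by linarith
    then show "sgn (N H \<bullet> (x + t *\<^sub>R y)) = sgn (N H \<bullet> x)"
      by (auto simp: inner_add_right sgn_real_def)
  qed
qed


lemma Lsp_subspace: "subspace V \<Longrightarrow> subspace (Lsp N B V x)"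
proof -
  assume V: "subspace V"
  have "subspace {y. \<forall>H\<in>B. N H \<bullet> x = 0 \<longrightarrow> N H \<bullet> y = 0}"
    unfolding subspace_def by (simp add: inner_add_right)
  moreover have "Lsp N B V x = V \<inter> {y. \<forall>H\<in>B. N H \<bullet> x = 0 \<longrightarrow> N H \<bullet> y = 0}"
    by (auto simp: Lsp_def)
  ultimately show ?thesis using V by (simp add: subspace_inter)
qed

lemma cl_zero: "y \<in> cl N B V x \<Longrightarrow> H \<in> B \<Longrightarrow> (N H \<bullet> y = 0) = (N H \<bullet> x = 0)"
proof -
  assume "y \<in> cl N B V x" "H \<in> B"
  then have "sgn (N H \<bullet> y) = sgn (N H \<bullet> x)" by (simp add: cl_def)
  then show ?thesis by (metis sgn_0_0)
qed

lemma cl_sub_Lsp: "cl N B V x \<subseteq> Lsp N B V x"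
proof
  fix y assume y: "y \<in> cl N B V x"
  then have "y \<in> V" by (simp add: cl_def)
  then show "y \<in> Lsp N B V x" using cl_zero[OF y] by (simp add: Lsp_def)
qed

lemma Lsp_eq: "y \<in> cl N B V x \<Longrightarrow> Lsp N B V y = Lsp N B V x"
  using cl_zero[of y N B V x] unfolding Lsp_def by blast

lemma span_cl:
  assumes "finite B" "subspace V" "x \<in> V"
  shows "span (cl N B V x) = Lsp N B V x"
proof
  show "span (cl N B V x) \<subseteq> Lsp N B V x"
    by (rule span_minimal[OF cl_sub_Lsp Lsp_subspace[OF assms(2)]])
next
  show "Lsp N B V x \<subseteq> span (cl N B V x)"
  proof
    fix y assume y: "y \<in> Lsp N B V x"
    obtain e where e: "e > 0" and he: "\<And>t. \<bar>t\<bar> < e \<Longrightarrow> (\<forall>H\<in>B. N H \<bullet> x \<noteq> 0 \<longrightarrow> sgn (N H \<bullet> (x + t *\<^sub>R y)) = sgn (N H \<bullet> x))"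
      using perturb[OF assms(1), of N x y] by blast
    define t where "t = e / 2"
    have t: "t > 0" "\<bar>t\<bar> < e" using e by (auto simp: t_def)
    have yV: "y \<in> V" using y by (auto simp: Lsp_def)
    have p: "x + t *\<^sub>R y \<in> cl N B V x"
      unfolding cl_def
    proof (intro CollectI conjI ballI)
      show "x + t *\<^sub>R y \<in> V" using assms(2,3) yV by (simp add: subspace_add subspace_scale)
    next
      fix H assume H: "H \<in> B"
      show "sgn (N H \<bullet> (x + t *\<^sub>R y)) = sgn (N H \<bullet> x)"
      proof (cases "N H \<bullet> x = 0")
        case True then have "N H \<bullet> y = 0" using y H by (auto simp: Lsp_def)
        then show ?thesis using True by (simp add: inner_add_right)
      next
        case False then show ?thesis using he[OF t(2)] H by blast
      qed
    qed
    have "y = (1 / t) *\<^sub>R ((x + t *\<^sub>R y) - x)" using t by simp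
    also have "\<dots> \<in> span (cl N B V x)"
      using p cl_self[OF assms(3)] by (intro span_mul span_diff span_base)
    finally show "y \<in> span (cl N B V x)" .
  qed
qed

lemma dim_cl: "finite B \<Longrightarrow> subspace V \<Longrightarrow> x \<in> V \<Longrightarrow> dim (cl N B V x) = dim (Lsp N B V x)"
  by (metis dim_span span_cl)

lemma dim_hyp:
  fixes L :: "'a::euclidean_space set"
  assumes L: "subspace L" and v: "v \<in> L" "a \<bullet> v \<noteq> 0"
  shows "dim L = dim (L \<inter> {w. a \<bullet> w = 0}) + 1"
proof -
  let ?K = "L \<inter> {w. a \<bullet> w = 0}"
  have K: "subspace ?K" using L unfolding subspace_def by (auto simp: inner_add_right)
  have "span (insert v ?K) = L"
  proof
    show "span (insert v ?K) \<subseteq> L" using L v by (intro span_minimal) auto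
  next
    show "L \<subseteq> span (insert v ?K)"
    proof
      fix w assume w: "w \<in> L"
      define c where "c = (a \<bullet> w) / (a \<bullet> v)"
      have "w - c *\<^sub>R v \<in> ?K" using w v L by (auto simp: c_def inner_diff_right subspace_diff subspace_scale)
      then have "w - c *\<^sub>R v \<in> span (insert v ?K)" by (simp add: span_base)
      moreover have "c *\<^sub>R v \<in> span (insert v ?K)" by (simp add: span_base span_mul)
      ultimately have "(w - c *\<^sub>R v) + c *\<^sub>R v \<in> span (insert v ?K)" by (rule span_add)
      then show "w \<in> span (insert v ?K)" by simp
    qed
  qed
  moreover have sK: "span ?K = ?K" using K by (simp only: span_eq_iff)
  have "v \<notin> ?K" using v by simp
  then have "v \<notin> span ?K" by (subst sK)
  ultimately show ?thesis using dim_insert[of v ?K] dim_span[of "insert v ?K"] by simp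
qed

lemma real_limit_nonneg:
  fixes p c e :: real
  assumes "e > 0" "\<And>t. 0 < t \<Longrightarrow> t < e \<Longrightarrow> p + t * c \<ge> 0"
  shows "p \<ge> 0"
proof (rule ccontr)
  assume p: "\<not> p \<ge> 0"
  define t where "t = min (e / 2) (- p / (2 * (\<bar>c\<bar> + 1)))"
  have "- p / (2 * (\<bar>c\<bar> + 1)) > 0" using p by (intro divide_pos_pos) auto
  then have t: "0 < t" "t < e" using assms(1) unfolding t_def by linarith+
  have "t * (\<bar>c\<bar> + 1) \<le> (- p / (2 * (\<bar>c\<bar> + 1))) * (\<bar>c\<bar> + 1)"
    by (intro mult_right_mono) (simp_all add: t_def)
  also have "\<dots> = - p / 2" by (simp add: field_simps)
  finally have "t * (\<bar>c\<bar> + 1) \<le> - p / 2" .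
  moreover have "t * c \<le> t * (\<bar>c\<bar> + 1)" using t by (intro mult_left_mono) auto
  ultimately have "p + t * c < 0" using p by linarith
  with assms(2)[OF t] show False by linarith
qed



lemma cl_insert: "cl N (insert H0 B) V y = cl N B V y \<inter> {w. sgn (N H0 \<bullet> w) = sgn (N H0 \<bullet> y)}"
  unfolding cl_def by blast

lemma cl_V: "y \<in> cl N B V x \<Longrightarrow> y \<in> V"
  by (simp add: cl_def)

lemma cl_sgn: "y \<in> cl N B V x \<Longrightarrow> H \<in> B \<Longrightarrow> sgn (N H \<bullet> y) = sgn (N H \<bullet> x)"
  by (simp add: cl_def)

lemma sgn_opp_real:
  fixes a b :: real
  shows "sgn a = - sgn b \<Longrightarrow> b > 0 \<Longrightarrow> a < 0" and "sgn a = - sgn b \<Longrightarrow> b < 0 \<Longrightarrow> a > 0"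
  by (auto simp: sgn_real_def split: if_splits)

lemma sgn_ne_real:
  fixes a b :: real
  shows "sgn a \<noteq> sgn b \<Longrightarrow> a \<noteq> 0 \<Longrightarrow> b \<noteq> 0 \<Longrightarrow> (a > 0 \<and> b < 0) \<or> (a < 0 \<and> b > 0)"
  by (auto simp: sgn_real_def split: if_splits)

lemma opp_point:
  assumes fB: "finite B" and V: "subspace V" and y: "y \<in> cl N B V x" and q: "q \<in> cl N B V x"
    and y0: "N0 \<bullet> y = 0" and q0: "N0 \<bullet> q \<noteq> 0"
  shows "\<exists>q'\<in>cl N B V x. sgn (N0 \<bullet> q') = - sgn (N0 \<bullet> q)"
proof -
  obtain e where e: "e > 0" and he: "\<And>t. \<bar>t\<bar> < e \<Longrightarrow> (\<forall>H\<in>B. N H \<bullet> y \<noteq> 0 \<longrightarrow> sgn (N H \<bullet> (y + t *\<^sub>R (y - q))) = sgn (N H \<bullet> y))"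
    using perturb[OF fB, of N y "y - q"] by blast
  define t where "t = e / 2"
  have t: "t > 0" "\<bar>t\<bar> < e" using e by (auto simp: t_def)
  define q' where "q' = y + t *\<^sub>R (y - q)"
  have "q' \<in> cl N B V x"
    unfolding cl_def
  proof (intro CollectI conjI ballI)
    show "q' \<in> V" using cl_V[OF y] cl_V[OF q] V unfolding q'_def
      by (simp add: subspace_add subspace_scale subspace_diff)
  next
    fix H assume H: "H \<in> B"
    show "sgn (N H \<bullet> q') = sgn (N H \<bullet> x)"
    proof (cases "N H \<bullet> y = 0")
      case True
      then have "N H \<bullet> x = 0" using cl_zero[OF y H] by simp
      then have "N H \<bullet> q = 0" using cl_zero[OF q H] by simp
      then show ?thesis using True \<open>N H \<bullet> x = 0\<close> by (simp add: q'_def inner_add_right inner_diff_right)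
    next
      case False
      then have "sgn (N H \<bullet> (y + t *\<^sub>R (y - q))) = sgn (N H \<bullet> y)" using he[OF t(2)] H by blast
      then show ?thesis using cl_sgn[OF y H] unfolding q'_def by simp
    qed
  qed
  moreover have "N0 \<bullet> q' = - t * (N0 \<bullet> q)" using y0
    by (simp add: q'_def inner_add_right inner_diff_right)
  then have "sgn (N0 \<bullet> q') = - sgn (N0 \<bullet> q)" using t(1) by (simp add: sgn_mult)
  ultimately show ?thesis by blast
qed

lemma zero_point:
  assumes V: "subspace V" and u: "u \<in> cl N B V x" and v: "v \<in> cl N B V x"
    and pu: "N0 \<bullet> u > 0" and pv: "N0 \<bullet> v < 0"
  shows "\<exists>w\<in>cl N B V x. N0 \<bullet> w = 0 \<and> (\<forall>a. a \<bullet> u < 0 \<longrightarrow> a \<bullet> v < 0 \<longrightarrow> a \<bullet> w < 0)"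
proof -
  define th where "th = (N0 \<bullet> u) / (N0 \<bullet> u - N0 \<bullet> v)"
  have th: "0 < th" "th < 1" using pu pv by (auto simp: th_def field_simps)
  define w where "w = (1 - th) *\<^sub>R u + th *\<^sub>R v"
  have "w \<in> cl N B V x"
    using cl_convex[OF V, of N B x] u v th unfolding convex_def w_def by auto
  moreover have "N0 \<bullet> w = 0"
  proof -
    have "N0 \<bullet> w = (N0 \<bullet> u) - th * (N0 \<bullet> u - N0 \<bullet> v)"
      by (simp add: w_def inner_add_right algebra_simps)
    also have "\<dots> = 0" using pu pv by (simp add: th_def)
    finally show ?thesis .
  qed
  moreover have "a \<bullet> w < 0" if "a \<bullet> u < 0" "a \<bullet> v < 0" for a
  proof -
    have "a \<bullet> w = (1 - th) * (a \<bullet> u) + th * (a \<bullet> v)" by (simp add: w_def inner_add_right)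
    moreover have "(1 - th) * (a \<bullet> u) < 0" using th that by (simp add: mult_pos_neg)
    moreover have "th * (a \<bullet> v) < 0" using th that by (simp add: mult_pos_neg)
    ultimately show ?thesis by linarith
  qed
  ultimately show ?thesis by blast
qed

lemma near_point:
  assumes fB: "finite B" and V: "subspace V" and y: "y \<in> cl N B V x" and p: "p \<in> cl N B V x"
    and y0: "N0 \<bullet> y = 0"
  shows "\<exists>e>0. \<forall>t. 0 < t \<and> t < e \<longrightarrow> y + t *\<^sub>R (p - y) \<in> cl N B V x \<and> N0 \<bullet> (y + t *\<^sub>R (p - y)) = t * (N0 \<bullet> p)"
proof -
  obtain e where e: "e > 0" and he: "\<And>t. \<bar>t\<bar> < e \<Longrightarrow> (\<forall>H\<in>B. N H \<bullet> y \<noteq> 0 \<longrightarrow> sgn (N H \<bullet> (y + t *\<^sub>R (p - y))) = sgn (N H \<bullet> y))"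
    using perturb[OF fB, of N y "p - y"] by blast
  show ?thesis
  proof (intro exI[of _ e] conjI allI impI e)
    fix t assume t: "0 < t \<and> t < e"
    then have t2: "\<bar>t\<bar> < e" by simp
    show "y + t *\<^sub>R (p - y) \<in> cl N B V x"
      unfolding cl_def
    proof (intro CollectI conjI ballI)
      show "y + t *\<^sub>R (p - y) \<in> V" using cl_V[OF y] cl_V[OF p] V
        by (simp add: subspace_add subspace_scale subspace_diff)
    next
      fix H assume H: "H \<in> B"
      show "sgn (N H \<bullet> (y + t *\<^sub>R (p - y))) = sgn (N H \<bullet> x)"
      proof (cases "N H \<bullet> y = 0")
        case True
        then have "N H \<bullet> x = 0" using cl_zero[OF y H] by simp
        then have "N H \<bullet> p = 0" using cl_zero[OF p H] by simp
        then show ?thesis using True \<open>N H \<bullet> x = 0\<close> by (simp add: inner_add_right inner_diff_right)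
      next
        case False
        then have "sgn (N H \<bullet> (y + t *\<^sub>R (p - y))) = sgn (N H \<bullet> y)" using he[OF t2] H by blast
        then show ?thesis using cl_sgn[OF y H] by simp
      qed
    qed
    show "N0 \<bullet> (y + t *\<^sub>R (p - y)) = t * (N0 \<bullet> p)" using y0
      by (simp add: inner_add_right inner_diff_right)
  qed
qed

lemma three_points:
  assumes fB: "finite B" and V: "subspace V" and x: "x \<in> V"
    and w: "w \<in> cl N B V x" and d: "sgn (N0 \<bullet> w) \<noteq> sgn (N0 \<bullet> x)"
  shows "\<exists>p\<in>cl N B V x. \<exists>z\<in>cl N B V x. \<exists>m\<in>cl N B V x. N0 \<bullet> p > 0 \<and> N0 \<bullet> z = 0 \<and> N0 \<bullet> m < 0"
proof -
  have xx: "x \<in> cl N B V x" using x by (rule cl_self)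
  have pm: "\<exists>z\<in>cl N B V x. N0 \<bullet> z = 0"
    if "u \<in> cl N B V x" "v \<in> cl N B V x" "N0 \<bullet> u > 0" "N0 \<bullet> v < 0" for u v
    using zero_point[OF V that] by blast
  have case0: "\<exists>p\<in>cl N B V x. \<exists>m\<in>cl N B V x. N0 \<bullet> p > 0 \<and> N0 \<bullet> m < 0"
    if yq: "y \<in> cl N B V x" "q \<in> cl N B V x" "N0 \<bullet> y = 0" "N0 \<bullet> q \<noteq> 0" for y q
  proof -
    obtain q' where q': "q' \<in> cl N B V x" "sgn (N0 \<bullet> q') = - sgn (N0 \<bullet> q)"
      using opp_point[OF fB V yq] by blast
    show ?thesis
    proof (cases "N0 \<bullet> q > 0")
      case True
      have "N0 \<bullet> q' < 0" using sgn_opp_real(1)[OF q'(2) True] .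
      then show ?thesis using True q'(1) yq(2) by blast
    next
      case False
      then have "N0 \<bullet> q < 0" using yq(4) by linarith
      have "N0 \<bullet> q' > 0" using sgn_opp_real(2)[OF q'(2) \<open>N0 \<bullet> q < 0\<close>] .
      then show ?thesis using \<open>N0 \<bullet> q < 0\<close> q'(1) yq(2) by blast
    qed
  qed
  show ?thesis
  proof (cases "N0 \<bullet> x = 0")
    case True
    then have "N0 \<bullet> w \<noteq> 0" using d by auto
    then show ?thesis using case0[OF xx w True] True xx by blast
  next
    case False
    show ?thesis
    proof (cases "N0 \<bullet> w = 0")
      case True
      then show ?thesis using case0[OF w xx True False] w by blast
    next
      case False2: False
      have "(N0 \<bullet> x > 0 \<and> N0 \<bullet> w < 0) \<or> (N0 \<bullet> x < 0 \<and> N0 \<bullet> w > 0)"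
        using sgn_ne_real[OF d[symmetric] False False2] by blast
      then show ?thesis using pm xx w by blast
    qed
  qed
qed



definition eul :: "'a::euclidean_space \<Rightarrow> 'a set \<Rightarrow> int" where
  "eul a D = (if D \<subseteq> {z. a \<bullet> z \<ge> 0} then (-1::int) ^ dim D else 0)"

lemma euler_key:
  assumes fB: "finite B" and V: "subspace V" and x: "x \<in> V"
  shows "sum (eul a) (cl N (insert H0 B) V ` cl N B V x) = eul a (cl N B V x)"
proof -
  let ?B0 = "insert H0 B"
  let ?N0 = "N H0"
  let ?C = "cl N B V x"
  have fB0: "finite ?B0" using fB by simp
  have xC: "x \<in> ?C" using x by (rule cl_self)
  have clB0: "cl N ?B0 V w = ?C \<inter> {u. sgn (?N0 \<bullet> u) = sgn (?N0 \<bullet> w)}" if "w \<in> ?C" for w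
    using cl_insert[of N H0 B V w] cl_eq[OF that] by simp
  show ?thesis
  proof (cases "\<forall>w\<in>?C. sgn (?N0 \<bullet> w) = sgn (?N0 \<bullet> x)")
    case True
    have "cl N ?B0 V w = ?C" if "w \<in> ?C" for w
      using clB0[OF that] True that by auto
    then have "cl N ?B0 V ` ?C = {?C}" using xC by blast
    then show ?thesis by simp
  next
    case False
    then obtain w where w: "w \<in> ?C" "sgn (?N0 \<bullet> w) \<noteq> sgn (?N0 \<bullet> x)" by blast
    obtain p z m where p: "p \<in> ?C" and z: "z \<in> ?C" and m: "m \<in> ?C"
      and sp: "?N0 \<bullet> p > 0" and sz: "?N0 \<bullet> z = 0" and sm: "?N0 \<bullet> m < 0"
      using three_points[OF fB V x w] by blast
    define P where "P = cl N ?B0 V p"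
    define Z where "Z = cl N ?B0 V z"
    define M where "M = cl N ?B0 V m"
    have P: "P = ?C \<inter> {u. ?N0 \<bullet> u > 0}" unfolding P_def clB0[OF p] using sp
      by (auto simp: sgn_real_def split: if_splits)
    have Z: "Z = ?C \<inter> {u. ?N0 \<bullet> u = 0}" unfolding Z_def clB0[OF z] using sz
      by (auto simp: sgn_real_def split: if_splits)
    have M: "M = ?C \<inter> {u. ?N0 \<bullet> u < 0}" unfolding M_def clB0[OF m] using sm
      by (auto simp: sgn_real_def split: if_splits)
    have img: "cl N ?B0 V ` ?C = {P, Z, M}"
    proof
      show "cl N ?B0 V ` ?C \<subseteq> {P, Z, M}"
      proof
        fix D assume "D \<in> cl N ?B0 V ` ?C"
        then obtain u where u: "u \<in> ?C" "D = cl N ?B0 V u" by blast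
        consider "?N0 \<bullet> u > 0" | "?N0 \<bullet> u = 0" | "?N0 \<bullet> u < 0" by linarith
        then show "D \<in> {P, Z, M}"
        proof cases
          case 1 then have "D = P" unfolding u(2) clB0[OF u(1)] P
              by (auto simp: sgn_real_def split: if_splits)
          then show ?thesis by simp
        next
          case 2 then have "D = Z" unfolding u(2) clB0[OF u(1)] Z
              by (auto simp: sgn_real_def split: if_splits)
          then show ?thesis by simp
        next
          case 3 then have "D = M" unfolding u(2) clB0[OF u(1)] M
              by (auto simp: sgn_real_def split: if_splits)
          then show ?thesis by simp
        qed
      qed
    next
      show "{P, Z, M} \<subseteq> cl N ?B0 V ` ?C"
        using p z m unfolding P_def Z_def M_def by blast
    qed
    have pP: "p \<in> P" and zZ: "z \<in> Z" and mM: "m \<in> M" using p z m sp sz sm P Z M by auto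
    have dist: "P \<noteq> Z" "P \<noteq> M" "Z \<noteq> M" using pP zZ mM sp sz sm P Z M by auto
    have sum3: "sum (eul a) (cl N ?B0 V ` ?C) = eul a P + eul a Z + eul a M"
      unfolding img using dist by simp
    have LC: "dim ?C = dim (Lsp N B V x)" by (rule dim_cl[OF fB V x])
    have dP: "dim P = dim ?C"
    proof -
      have "dim P = dim (Lsp N ?B0 V p)" unfolding P_def by (rule dim_cl[OF fB0 V cl_V[OF p]])
      also have "Lsp N ?B0 V p = Lsp N B V p" using sp by (auto simp: Lsp_def)
      also have "\<dots> = Lsp N B V x" by (rule Lsp_eq[OF p])
      finally show ?thesis using LC by simp
    qed
    have dM: "dim M = dim ?C"
    proof -
      have "dim M = dim (Lsp N ?B0 V m)" unfolding M_def by (rule dim_cl[OF fB0 V cl_V[OF m]])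
      also have "Lsp N ?B0 V m = Lsp N B V m" using sm by (auto simp: Lsp_def)
      also have "\<dots> = Lsp N B V x" by (rule Lsp_eq[OF m])
      finally show ?thesis using LC by simp
    qed
    have dZ: "dim ?C = dim Z + 1"
    proof -
      have "dim Z = dim (Lsp N ?B0 V z)" unfolding Z_def by (rule dim_cl[OF fB0 V cl_V[OF z]])
      also have "Lsp N ?B0 V z = Lsp N B V z \<inter> {u. ?N0 \<bullet> u = 0}" using sz by (auto simp: Lsp_def)
      also have "\<dots> = Lsp N B V x \<inter> {u. ?N0 \<bullet> u = 0}" by (simp only: Lsp_eq[OF z])
      finally have "dim Z = dim (Lsp N B V x \<inter> {u. ?N0 \<bullet> u = 0})" .
      moreover have "dim (Lsp N B V x) = dim (Lsp N B V x \<inter> {u. ?N0 \<bullet> u = 0}) + 1"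
        using dim_hyp[OF Lsp_subspace[OF V] cl_sub_Lsp[THEN subsetD, OF p]] sp by simp
      ultimately show ?thesis using LC by simp
    qed
    let ?h = "{u. a \<bullet> u \<ge> 0}"
    have closeZ: "Z \<subseteq> ?h" if q: "q \<in> ?C" "?N0 \<bullet> q \<noteq> 0" and Q: "?C \<inter> {u. sgn (?N0 \<bullet> u) = sgn (?N0 \<bullet> q)} \<subseteq> ?h" for q
    proof
      fix y assume "y \<in> Z"
      then have y: "y \<in> ?C" "?N0 \<bullet> y = 0" using Z by auto
      obtain e where e: "e > 0" and he: "\<And>t. 0 < t \<Longrightarrow> t < e \<Longrightarrow> y + t *\<^sub>R (q - y) \<in> ?C \<and> ?N0 \<bullet> (y + t *\<^sub>R (q - y)) = t * (?N0 \<bullet> q)"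
        using near_point[OF fB V y(1) q(1) y(2)] by blast
      have "a \<bullet> y + t * (a \<bullet> (q - y)) \<ge> 0" if t: "0 < t" "t < e" for t
      proof -
        have "sgn (?N0 \<bullet> (y + t *\<^sub>R (q - y))) = sgn (?N0 \<bullet> q)"
          using he[OF t] t(1) by (simp add: sgn_mult)
        then have "y + t *\<^sub>R (q - y) \<in> ?h" using Q he[OF t] by blast
        then show ?thesis by (simp add: inner_add_right)
      qed
      then have "a \<bullet> y \<ge> 0" using real_limit_nonneg[OF e] by blast
      then show "y \<in> ?h" by simp
    qed
    have PZ: "P \<subseteq> ?h \<Longrightarrow> Z \<subseteq> ?h"
      by (rule closeZ[OF p]) (use sp clB0[OF p] P_def in auto)
    have MZ: "M \<subseteq> ?h \<Longrightarrow> Z \<subseteq> ?h"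
      by (rule closeZ[OF m]) (use sm clB0[OF m] M_def in auto)
    have ZPM: "P \<subseteq> ?h \<or> M \<subseteq> ?h" if Zh: "Z \<subseteq> ?h"
    proof (rule ccontr)
      assume "\<not> (P \<subseteq> ?h \<or> M \<subseteq> ?h)"
      then have "\<not> P \<subseteq> ?h" "\<not> M \<subseteq> ?h" by auto
      then obtain u v where u: "u \<in> P" "u \<notin> ?h" and v: "v \<in> M" "v \<notin> ?h"
        by blast
      then have uv: "a \<bullet> u < 0" "a \<bullet> v < 0" by auto
      have "u \<in> ?C" "?N0 \<bullet> u > 0" "v \<in> ?C" "?N0 \<bullet> v < 0" using u v P M by auto
      then obtain w where "w \<in> ?C" "?N0 \<bullet> w = 0" "a \<bullet> w < 0"
        using zero_point[OF V, of u N B x v ?N0] uv by blast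
      then have "w \<in> Z" "w \<notin> ?h" using Z by auto
      then show False using Zh by blast
    qed
    have CU: "?C = P \<union> Z \<union> M" using P Z M by auto
    have Ch: "?C \<subseteq> ?h \<longleftrightarrow> P \<subseteq> ?h \<and> Z \<subseteq> ?h \<and> M \<subseteq> ?h" using CU by blast
    define d where "d = dim Z"
    have dd: "dim P = d + 1" "dim M = d + 1" "dim ?C = d + 1" "dim Z = d"
      using dP dM dZ by (auto simp: d_def)
    have e1: "(-1::int)^(d+1) = - ((-1)^d)" by simp
    show ?thesis
    proof (cases "P \<subseteq> ?h")
      case True
      then have Zh: "Z \<subseteq> ?h" by (rule PZ)
      show ?thesis
      proof (cases "M \<subseteq> ?h")
        case True2: True
        then have "?C \<subseteq> ?h" using Ch True Zh by blast
        then show ?thesis unfolding sum3 eul_def dd e1 using True True2 Zh by simp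
      next
        case False2: False
        then have "\<not> ?C \<subseteq> ?h" using Ch by blast
        then show ?thesis unfolding sum3 eul_def dd e1 using True False2 Zh by simp
      qed
    next
      case False
      then have nC: "\<not> ?C \<subseteq> ?h" using Ch by blast
      show ?thesis
      proof (cases "M \<subseteq> ?h")
        case True2: True
        then have Zh: "Z \<subseteq> ?h" by (rule MZ)
        then show ?thesis unfolding sum3 eul_def dd e1 using False True2 nC by simp
      next
        case False2: False
        then have "\<not> Z \<subseteq> ?h" using ZPM False by blast
        then show ?thesis unfolding sum3 eul_def dd e1 using False False2 nC by simp
      qed
    qed
  qed
qed



lemma euler_step:
  assumes fB: "finite B" and V: "subspace V"
  shows "sum (eul a) (cells N (insert H0 B) V) = sum (eul a) (cells N B V)"
proof -
  let ?B0 = "insert H0 B"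
  define g where "g D = cl N B V (SOME y. y \<in> D)" for D
  have gD: "g (cl N ?B0 V y0) = cl N B V y0" if y0: "y0 \<in> V" for y0
  proof -
    have "y0 \<in> cl N ?B0 V y0" using y0 by (rule cl_self)
    then have "(SOME y. y \<in> cl N ?B0 V y0) \<in> cl N ?B0 V y0" by (rule someI)
    then have "(SOME y. y \<in> cl N ?B0 V y0) \<in> cl N B V y0" using cl_insert[of N H0 B V y0] by blast
    then show ?thesis unfolding g_def by (rule cl_eq)
  qed
  have img: "g ` cells N ?B0 V \<subseteq> cells N B V"
    unfolding cells_def using gD by auto
  have fib: "{D \<in> cells N ?B0 V. g D = C} = cl N ?B0 V ` C" if C: "C \<in> cells N B V" for C
  proof -
    obtain x where x: "x \<in> V" "C = cl N B V x" using C by (auto simp: cells_def)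
    show ?thesis
    proof
      show "{D \<in> cells N ?B0 V. g D = C} \<subseteq> cl N ?B0 V ` C"
      proof
        fix D assume D: "D \<in> {D \<in> cells N ?B0 V. g D = C}"
        then obtain y0 where y0: "y0 \<in> V" "D = cl N ?B0 V y0" by (auto simp: cells_def)
        then have "cl N B V y0 = C" using D gD by auto
        then have "y0 \<in> C" using cl_self[OF y0(1), of N B] by simp
        then show "D \<in> cl N ?B0 V ` C" using y0 by blast
      qed
    next
      show "cl N ?B0 V ` C \<subseteq> {D \<in> cells N ?B0 V. g D = C}"
      proof
        fix D assume "D \<in> cl N ?B0 V ` C"
        then obtain w where w: "w \<in> C" "D = cl N ?B0 V w" by blast
        have wV: "w \<in> V" using w x by (auto simp: cl_def)
        have "g D = C" using gD[OF wV] w x cl_eq by metis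
        then show "D \<in> {D \<in> cells N ?B0 V. g D = C}" using wV w(2) by (auto simp: cells_def)
      qed
    qed
  qed
  have "sum (eul a) (cells N ?B0 V) = (\<Sum>C\<in>cells N B V. sum (eul a) {D \<in> cells N ?B0 V. g D = C})"
    using sum.group[OF finite_cells finite_cells img, of "eul a"] fB by simp
  also have "\<dots> = (\<Sum>C\<in>cells N B V. eul a C)"
  proof (rule sum.cong[OF refl])
    fix C assume C: "C \<in> cells N B V"
    then obtain x where x: "x \<in> V" "C = cl N B V x" by (auto simp: cells_def)
    show "sum (eul a) {D \<in> cells N ?B0 V. g D = C} = eul a C"
      using euler_key[OF fB V x(1), of a N H0] fib[OF C] x(2) by simp
  qed
  finally show ?thesis .
qed

lemma euler:
  assumes fB: "finite B" and V: "subspace V" and v: "v \<in> V" "a \<bullet> v < 0"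
  shows "sum (eul a) (cells N B V) = 0"
  using fB
proof (induction B rule: finite_induct)
  case empty
  have "cl N {} V x = V" for x by (auto simp: cl_def)
  then have "cells N {} V = {V}" using v by (auto simp: cells_def)
  moreover have "\<not> V \<subseteq> {z. a \<bullet> z \<ge> 0}" using v by auto
  ultimately show ?case by (simp add: eul_def)
next
  case (insert H0 B)
  then show ?case using euler_step[OF insert(1) V] by simp
qed



definition Kc :: "('a::euclidean_space set \<Rightarrow> 'a) \<Rightarrow> 'a set set \<Rightarrow> 'a \<Rightarrow> 'a set" where
  "Kc N A y = {z. \<forall>H\<in>A. (N H \<bullet> y = 0 \<longrightarrow> N H \<bullet> z = 0) \<and> (N H \<bullet> y > 0 \<longrightarrow> N H \<bullet> z \<ge> 0) \<and> (N H \<bullet> y < 0 \<longrightarrow> N H \<bullet> z \<le> 0)}"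

lemma closed_Kc: "closed (Kc N A y)"
proof -
  have eq: "Kc N A y = (\<Inter>H\<in>A. {z. (N H \<bullet> y = 0 \<longrightarrow> N H \<bullet> z = 0) \<and> (N H \<bullet> y > 0 \<longrightarrow> N H \<bullet> z \<ge> 0) \<and> (N H \<bullet> y < 0 \<longrightarrow> N H \<bullet> z \<le> 0)})"
    by (auto simp: Kc_def)
  have "closed {z. (N H \<bullet> y = 0 \<longrightarrow> N H \<bullet> z = 0) \<and> (N H \<bullet> y > 0 \<longrightarrow> N H \<bullet> z \<ge> 0) \<and> (N H \<bullet> y < 0 \<longrightarrow> N H \<bullet> z \<le> 0)}" for H
  proof -
    consider "N H \<bullet> y = 0" | "N H \<bullet> y > 0" | "N H \<bullet> y < 0" by linarith
    then show ?thesis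
    proof cases
      case 1 then show ?thesis using closed_hyperplane[of "N H" 0] by simp
    next
      case 2 then show ?thesis using closed_halfspace_ge[of 0 "N H"] by simp
    next
      case 3 then show ?thesis using closed_halfspace_le[of "N H" 0] by simp
    qed
  qed
  then show ?thesis unfolding eq by (intro closed_INT) blast
qed

lemma cl_sub_Kc: "cl N A V y \<subseteq> Kc N A y"
proof
  fix z assume z: "z \<in> cl N A V y"
  show "z \<in> Kc N A y" unfolding Kc_def
  proof (intro CollectI ballI)
    fix H assume H: "H \<in> A"
    have "sgn (N H \<bullet> z) = sgn (N H \<bullet> y)" using cl_sgn[OF z H] .
    then show "(N H \<bullet> y = 0 \<longrightarrow> N H \<bullet> z = 0) \<and> (N H \<bullet> y > 0 \<longrightarrow> N H \<bullet> z \<ge> 0) \<and> (N H \<bullet> y < 0 \<longrightarrow> N H \<bullet> z \<le> 0)"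
      by (auto simp: sgn_real_def split: if_splits)
  qed
qed

lemma seg_in_cl:
  assumes z: "z \<in> Kc N A y" and t: "0 < t" "t \<le> 1"
  shows "z + t *\<^sub>R (y - z) \<in> cl N A UNIV y"
  unfolding cl_def
proof (intro CollectI conjI ballI UNIV_I)
  fix H assume H: "H \<in> A"
  have e: "N H \<bullet> (z + t *\<^sub>R (y - z)) = (1 - t) * (N H \<bullet> z) + t * (N H \<bullet> y)"
    by (simp add: inner_add_right inner_diff_right algebra_simps)
  have zz: "(N H \<bullet> y = 0 \<longrightarrow> N H \<bullet> z = 0) \<and> (N H \<bullet> y > 0 \<longrightarrow> N H \<bullet> z \<ge> 0) \<and> (N H \<bullet> y < 0 \<longrightarrow> N H \<bullet> z \<le> 0)"
    using z H by (simp add: Kc_def)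
  consider "N H \<bullet> y = 0" | "N H \<bullet> y > 0" | "N H \<bullet> y < 0" by linarith
  then show "sgn (N H \<bullet> (z + t *\<^sub>R (y - z))) = sgn (N H \<bullet> y)"
  proof cases
    case 1 then show ?thesis using zz e by simp
  next
    case 2
    have "(1 - t) * (N H \<bullet> z) \<ge> 0" using zz 2 t by simp
    moreover have "t * (N H \<bullet> y) > 0" using 2 t by simp
    ultimately show ?thesis using e 2 by simp
  next
    case 3
    have "(1 - t) * (N H \<bullet> z) \<le> 0" using zz 3 t by (simp add: mult_nonneg_nonpos)
    moreover have "t * (N H \<bullet> y) < 0" using 3 t by (simp add: mult_pos_neg)
    ultimately show ?thesis using e 3 by simp
  qed
qed

lemma closure_cl: "closure (cl N A UNIV y) = Kc N A y"
proof
  show "closure (cl N A UNIV y) \<subseteq> Kc N A y"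
    by (rule closure_minimal[OF cl_sub_Kc closed_Kc])
next
  show "Kc N A y \<subseteq> closure (cl N A UNIV y)"
  proof
    fix z assume z: "z \<in> Kc N A y"
    show "z \<in> closure (cl N A UNIV y)"
      unfolding closure_approachable
    proof (intro allI impI)
      fix e :: real assume e: "e > 0"
      define t where "t = min 1 (e / (2 * (norm (y - z) + 1)))"
      have epos: "e / (2 * (norm (y - z) + 1)) > 0" using e by (intro divide_pos_pos) (simp, smt (verit) norm_ge_zero)
      then have t: "0 < t" "t \<le> 1" by (auto simp: t_def)
      have "dist (z + t *\<^sub>R (y - z)) z = t * norm (y - z)" using t by (simp add: dist_norm)
      also have "\<dots> \<le> (e / (2 * (norm (y - z) + 1))) * (norm (y - z) + 1)"
        using epos by (intro mult_mono) (auto simp: t_def)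
      also have "\<dots> = e / 2"
      proof -
        have nz: "norm (y - z) + 1 \<noteq> 0" by (smt (verit) norm_ge_zero)
        then show ?thesis by (simp add: field_simps)
      qed
      also have "\<dots> < e" using e by simp
      finally show "\<exists>q\<in>cl N A UNIV y. dist q z < e" using seg_in_cl[OF z t] by blast
    qed
  qed
qed



lemma Kc_memI:
  assumes "\<And>H. H \<in> A \<Longrightarrow> (N H \<bullet> y = 0 \<longrightarrow> N H \<bullet> z = 0) \<and> (N H \<bullet> y > 0 \<longrightarrow> N H \<bullet> z \<ge> 0) \<and> (N H \<bullet> y < 0 \<longrightarrow> N H \<bullet> z \<le> 0)"
  shows "z \<in> Kc N A y"
  using assms by (simp add: Kc_def)

lemma Kc_memD:
  assumes "z \<in> Kc N A y" "H \<in> A"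
  shows "(N H \<bullet> y = 0 \<longrightarrow> N H \<bullet> z = 0) \<and> (N H \<bullet> y > 0 \<longrightarrow> N H \<bullet> z \<ge> 0) \<and> (N H \<bullet> y < 0 \<longrightarrow> N H \<bullet> z \<le> 0)"
  using assms by (simp add: Kc_def)

lemma face_is_cell:
  assumes fA: "finite A" and x: "\<forall>H\<in>A. N H \<bullet> x \<noteq> 0"
    and F: "F face_of Kc N A x" "F \<noteq> {}"
  shows "\<exists>w. F = Kc N A w"
proof -
  let ?R = "Kc N A x"
  define I where "I = {H\<in>A. \<exists>z\<in>F. N H \<bullet> z \<noteq> 0}"
  have fI: "finite I" using fA by (simp add: I_def)
  define wf where "wf H = (SOME z. z \<in> F \<and> N H \<bullet> z \<noteq> 0)" for H
  have wf: "wf H \<in> F \<and> N H \<bullet> wf H \<noteq> 0" if "H \<in> I" for H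
    using that unfolding I_def wf_def by (metis (mono_tags, lifting) mem_Collect_eq someI_ex)
  have FR: "F \<subseteq> ?R" using F(1) by (rule face_of_imp_subset)
  have cF: "convex F" using F(1) by (rule face_of_imp_convex)
  have sR: "sgn (N H \<bullet> x) * (N H \<bullet> z) \<ge> 0" if "z \<in> ?R" "H \<in> A" for z H
  proof -
    have "N H \<bullet> x \<noteq> 0" using x that(2) by blast
    then show ?thesis using Kc_memD[OF that]
      by (cases "N H \<bullet> x > 0") (auto simp: mult_nonpos_nonpos)
  qed
  obtain f0 where f0: "f0 \<in> F" using F(2) by blast
  obtain w where wF: "w \<in> F" and wI: "\<And>H. H \<in> I \<Longrightarrow> sgn (N H \<bullet> x) * (N H \<bullet> w) > 0"
  proof (cases "I = {}")
    case True then show ?thesis using that f0 by blast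
  next
    case False
    define c where "c = card I"
    have c: "c > 0" using False fI by (simp add: c_def card_gt_0_iff)
    define w where "w = (\<Sum>H\<in>I. (1 / real c) *\<^sub>R wf H)"
    have "w \<in> F" unfolding w_def
      by (rule convex_sum[OF fI cF]) (use c wf in \<open>auto simp: c_def\<close>)
    moreover have "sgn (N H \<bullet> x) * (N H \<bullet> w) > 0" if H: "H \<in> I" for H
    proof -
      have HA: "H \<in> A" using H by (simp add: I_def)
      have "sgn (N H \<bullet> x) * (N H \<bullet> w) = (\<Sum>G\<in>I. (1 / real c) * (sgn (N H \<bullet> x) * (N H \<bullet> wf G)))"
        by (simp add: w_def inner_sum_right sum_distrib_left algebra_simps)
      also have "\<dots> > 0"
      proof (rule sum_pos2[OF fI H])
        have "sgn (N H \<bullet> x) * (N H \<bullet> wf H) \<ge> 0" using sR[OF _ HA] wf[OF H] FR by blast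
        moreover have "sgn (N H \<bullet> x) * (N H \<bullet> wf H) \<noteq> 0" using wf[OF H] x HA by (simp add: sgn_0_0)
        ultimately have "sgn (N H \<bullet> x) * (N H \<bullet> wf H) > 0" by linarith
        then show "0 < 1 / real c * (sgn (N H \<bullet> x) * (N H \<bullet> wf H))" using c by simp
      next
        fix G assume "G \<in> I"
        then have "sgn (N H \<bullet> x) * (N H \<bullet> wf G) \<ge> 0" using sR[OF _ HA] wf FR by blast
        then show "0 \<le> 1 / real c * (sgn (N H \<bullet> x) * (N H \<bullet> wf G))" using c by simp
      qed
      finally show ?thesis .
    qed
    ultimately show ?thesis using that by blast
  qed
  have wT: "N H \<bullet> w = 0" if "H \<in> A" "H \<notin> I" for H
    using that wF by (auto simp: I_def)
  have sw: "sgn (N H \<bullet> w) = sgn (N H \<bullet> x)" if "H \<in> I" for H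
  proof -
    have "N H \<bullet> x \<noteq> 0" using x that by (auto simp: I_def)
    then show ?thesis using wI[OF that]
      by (cases "N H \<bullet> x > 0") (auto simp: sgn_real_def split: if_splits)
  qed
  have "F = Kc N A w"
  proof
    show "F \<subseteq> Kc N A w"
    proof
      fix z assume z: "z \<in> F"
      show "z \<in> Kc N A w"
      proof (rule Kc_memI)
        fix H assume HA: "H \<in> A"
        show "(N H \<bullet> w = 0 \<longrightarrow> N H \<bullet> z = 0) \<and> (N H \<bullet> w > 0 \<longrightarrow> N H \<bullet> z \<ge> 0) \<and> (N H \<bullet> w < 0 \<longrightarrow> N H \<bullet> z \<le> 0)"
        proof (cases "H \<in> I")
          case True
          have "sgn (N H \<bullet> w) = sgn (N H \<bullet> x)" by (rule sw[OF True])
          moreover have "z \<in> ?R" using z FR by blast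
          then have "(N H \<bullet> x > 0 \<longrightarrow> N H \<bullet> z \<ge> 0) \<and> (N H \<bullet> x < 0 \<longrightarrow> N H \<bullet> z \<le> 0)"
            using Kc_memD[OF _ HA] by blast
          moreover have "N H \<bullet> x \<noteq> 0" using x HA by blast
          ultimately show ?thesis by (auto simp: sgn_real_def split: if_splits)
        next
          case False
          then have "N H \<bullet> z = 0" using z HA by (auto simp: I_def)
          then show ?thesis by simp
        qed
      qed
    qed
  next
    show "Kc N A w \<subseteq> F"
    proof
      fix z assume z: "z \<in> Kc N A w"
      have memR: "q \<in> ?R" if q: "\<And>H. H \<in> A \<Longrightarrow> H \<notin> I \<Longrightarrow> N H \<bullet> q = 0"
        "\<And>H. H \<in> I \<Longrightarrow> sgn (N H \<bullet> x) * (N H \<bullet> q) \<ge> 0" for q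
      proof (rule Kc_memI)
        fix H assume HA: "H \<in> A"
        show "(N H \<bullet> x = 0 \<longrightarrow> N H \<bullet> q = 0) \<and> (N H \<bullet> x > 0 \<longrightarrow> N H \<bullet> q \<ge> 0) \<and> (N H \<bullet> x < 0 \<longrightarrow> N H \<bullet> q \<le> 0)"
        proof (cases "H \<in> I")
          case True
          then show ?thesis using q(2)[OF True] x HA
            by (auto simp: sgn_real_def split: if_splits)
        next
          case False then show ?thesis using q(1)[OF HA False] by simp
        qed
      qed
      have zT: "N H \<bullet> z = 0" if "H \<in> A" "H \<notin> I" for H
        using Kc_memD[OF z that(1)] wT[OF that] by simp
      have zI: "sgn (N H \<bullet> x) * (N H \<bullet> z) \<ge> 0" if H: "H \<in> I" for H
      proof -
        have HA: "H \<in> A" using H by (simp add: I_def)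
        have "sgn (N H \<bullet> w) = sgn (N H \<bullet> x)" by (rule sw[OF H])
        moreover have "N H \<bullet> x \<noteq> 0" using x HA by blast
        ultimately show ?thesis using Kc_memD[OF z HA]
          by (cases "N H \<bullet> x > 0") (auto simp: sgn_real_def mult_nonpos_nonpos split: if_splits)
      qed
      have zR: "z \<in> ?R" by (rule memR) (use zT zI in auto)
      show "z \<in> F"
      proof (cases "z = w")
        case True then show ?thesis using wF by simp
      next
        case False
        obtain e where e: "e > 0" and he: "\<And>t. \<bar>t\<bar> < e \<Longrightarrow> (\<forall>H\<in>A. N H \<bullet> w \<noteq> 0 \<longrightarrow> sgn (N H \<bullet> (w + t *\<^sub>R (w - z))) = sgn (N H \<bullet> w))"
          using perturb[OF fA, of N w "w - z"] by blast
        define t where "t = e / 2"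
        have t: "t > 0" "\<bar>t\<bar> < e" using e by (auto simp: t_def)
        define u where "u = w + t *\<^sub>R (w - z)"
        have uR: "u \<in> ?R"
        proof (rule memR)
          fix H assume "H \<in> A" "H \<notin> I"
          then show "N H \<bullet> u = 0" using wT zT by (simp add: u_def inner_add_right inner_diff_right)
        next
          fix H assume H: "H \<in> I"
          have HA: "H \<in> A" using H by (simp add: I_def)
          have "N H \<bullet> w \<noteq> 0" using wI[OF H] by auto
          then have "sgn (N H \<bullet> u) = sgn (N H \<bullet> w)" using he[OF t(2)] HA by (simp add: u_def)
          then have "sgn (N H \<bullet> u) = sgn (N H \<bullet> x)" using sw[OF H] by simp
          then show "sgn (N H \<bullet> x) * (N H \<bullet> u) \<ge> 0"
            by (auto simp: sgn_real_def split: if_splits)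
        qed
        have "w \<in> open_segment z u"
          unfolding in_segment(2)
        proof (intro conjI exI[of _ "1 / (1 + t)"])
          show "z \<noteq> u"
          proof
            assume "z = u"
            then have "(1 + t) *\<^sub>R (w - z) = 0" by (simp add: u_def algebra_simps)
            then show False using False t by simp
          qed
          show "0 < 1 / (1 + t)" using t by simp
          show "1 / (1 + t) < 1" using t by simp
          have "(1 - 1 / (1 + t)) *\<^sub>R z + (1 / (1 + t)) *\<^sub>R u
                = (1 / (1 + t)) *\<^sub>R (t *\<^sub>R z + u)"
            using t by (simp add: field_simps scaleR_add_right)
          also have "t *\<^sub>R z + u = (1 + t) *\<^sub>R w" by (simp add: u_def algebra_simps)
          also have "(1 / (1 + t)) *\<^sub>R ((1 + t) *\<^sub>R w) = w" using t by simp
          finally show "w = (1 - 1 / (1 + t)) *\<^sub>R z + (1 / (1 + t)) *\<^sub>R u" by simp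
        qed
        then show ?thesis using face_ofD[OF F(1) _ zR uR wF] by blast
      qed
    qed
  qed
  then show ?thesis by blast
qed



lemma sum0:
  fixes u p q :: real
  assumes u: "0 < u" "u < 1" and pq: "0 \<le> p" "0 \<le> q" "(1 - u) * p + u * q = 0"
  shows "p = 0 \<and> q = 0"
proof -
  have a: "(1 - u) * p \<ge> 0" "u * q \<ge> 0" using u pq by auto
  then have "(1 - u) * p = 0" "u * q = 0" using pq(3) by linarith+
  then show ?thesis using u by auto
qed

lemma cell_is_face:
  assumes fA: "finite A" and w0: "\<forall>H\<in>A. N H \<bullet> w0 \<noteq> 0"
  shows "\<exists>x. (\<forall>H\<in>A. N H \<bullet> x \<noteq> 0) \<and> Kc N A y face_of Kc N A x"
proof -
  obtain e where e: "e > 0" and he: "\<And>t. \<bar>t\<bar> < e \<Longrightarrow> (\<forall>H\<in>A. N H \<bullet> y \<noteq> 0 \<longrightarrow> sgn (N H \<bullet> (y + t *\<^sub>R w0)) = sgn (N H \<bullet> y))"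
    using perturb[OF fA, of N y w0] by blast
  define t where "t = e / 2"
  have t: "t > 0" "\<bar>t\<bar> < e" using e by (auto simp: t_def)
  define x where "x = y + t *\<^sub>R w0"
  have sx: "sgn (N H \<bullet> x) = sgn (N H \<bullet> y)" if "H \<in> A" "N H \<bullet> y \<noteq> 0" for H
    using he[OF t(2)] that by (simp add: x_def)
  have x0: "N H \<bullet> x = t * (N H \<bullet> w0)" if "N H \<bullet> y = 0" for H
    using that by (simp add: x_def inner_add_right)
  have xnz: "\<forall>H\<in>A. N H \<bullet> x \<noteq> 0"
  proof
    fix H assume H: "H \<in> A"
    show "N H \<bullet> x \<noteq> 0"
    proof (cases "N H \<bullet> y = 0")
      case True then show ?thesis using x0 w0 H t by simp
    next
      case False then show ?thesis using sx[OF H False] by (metis sgn_0_0)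
    qed
  qed
  have sub: "Kc N A y \<subseteq> Kc N A x"
  proof
    fix z assume z: "z \<in> Kc N A y"
    show "z \<in> Kc N A x"
    proof (rule Kc_memI)
      fix H assume H: "H \<in> A"
      show "(N H \<bullet> x = 0 \<longrightarrow> N H \<bullet> z = 0) \<and> (N H \<bullet> x > 0 \<longrightarrow> N H \<bullet> z \<ge> 0) \<and> (N H \<bullet> x < 0 \<longrightarrow> N H \<bullet> z \<le> 0)"
      proof (cases "N H \<bullet> y = 0")
        case True then show ?thesis using Kc_memD[OF z H] by simp
      next
        case False
        then have "sgn (N H \<bullet> x) = sgn (N H \<bullet> y)" by (rule sx[OF H])
        then show ?thesis using Kc_memD[OF z H] False by (auto simp: sgn_real_def split: if_splits)
      qed
    qed
  qed
  have cvx: "convex (Kc N A y)"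
    using convex_closure[OF cl_convex[OF subspace_UNIV, of N A y]] by (simp add: closure_cl)
  have "Kc N A y face_of Kc N A x"
    unfolding face_of_def
  proof (intro conjI sub cvx ballI impI)
    fix a b p assume a: "a \<in> Kc N A x" and b: "b \<in> Kc N A x" and p: "p \<in> Kc N A y"
      and seg: "p \<in> open_segment a b"
    obtain u where u: "0 < u" "u < 1" and pu: "p = (1 - u) *\<^sub>R a + u *\<^sub>R b"
      using seg unfolding in_segment(2) by blast
    have both: "(N H \<bullet> y = 0 \<longrightarrow> N H \<bullet> q = 0) \<and> (N H \<bullet> y > 0 \<longrightarrow> N H \<bullet> q \<ge> 0) \<and> (N H \<bullet> y < 0 \<longrightarrow> N H \<bullet> q \<le> 0)"
      if q: "q = a \<or> q = b" and H: "H \<in> A" for q H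
    proof -
      have ea: "(N H \<bullet> x > 0 \<longrightarrow> N H \<bullet> a \<ge> 0) \<and> (N H \<bullet> x < 0 \<longrightarrow> N H \<bullet> a \<le> 0)"
        using Kc_memD[OF a H] by blast
      have eb: "(N H \<bullet> x > 0 \<longrightarrow> N H \<bullet> b \<ge> 0) \<and> (N H \<bullet> x < 0 \<longrightarrow> N H \<bullet> b \<le> 0)"
        using Kc_memD[OF b H] by blast
      have xn: "N H \<bullet> x \<noteq> 0" using xnz H by blast
      have ep: "N H \<bullet> p = (1 - u) * (N H \<bullet> a) + u * (N H \<bullet> b)" by (simp add: pu inner_add_right)
      show ?thesis
      proof (cases "N H \<bullet> y = 0")
        case True
        then have p0: "N H \<bullet> p = 0" using Kc_memD[OF p H] by simp
        have "N H \<bullet> a = 0 \<and> N H \<bullet> b = 0"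
        proof (cases "N H \<bullet> x > 0")
          case True
          then have "N H \<bullet> a \<ge> 0" "N H \<bullet> b \<ge> 0" using ea eb by auto
          then show ?thesis using sum0[OF u] p0 ep by simp
        next
          case False
          then have "N H \<bullet> x < 0" using xn by linarith
          then have "- (N H \<bullet> a) \<ge> 0" "- (N H \<bullet> b) \<ge> 0" using ea eb by auto
          moreover have "(1 - u) * (- (N H \<bullet> a)) + u * (- (N H \<bullet> b)) = 0" using p0 ep by simp
          ultimately show ?thesis using sum0[OF u] by fastforce
        qed
        then show ?thesis using q True by auto
      next
        case False
        then have "sgn (N H \<bullet> x) = sgn (N H \<bullet> y)" by (rule sx[OF H])
        then show ?thesis using ea eb False q by (auto simp: sgn_real_def split: if_splits)
      qed
    qed
    have ok: "a \<in> Kc N A y \<and> b \<in> Kc N A y"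
      using both by (intro conjI Kc_memI) blast+
    show "a \<in> Kc N A y" using ok by blast
    show "b \<in> Kc N A y" using ok by blast
  qed
  then show ?thesis using xnz by blast
qed

lemma component_cl:
  assumes fA: "finite A" and x: "\<forall>H\<in>A. N H \<bullet> x \<noteq> 0"
    and hyp: "\<And>H. H \<in> A \<Longrightarrow> H = {z. N H \<bullet> z = 0}"
  shows "connected_component_set (- \<Union>A) x = cl N A UNIV x"
proof -
  let ?C = "cl N A UNIV x"
  let ?S = "- \<Union>A"
  define O1 where "O1 H = (if N H \<bullet> x > 0 then {z. N H \<bullet> z > 0} else {z. N H \<bullet> z < 0})" for H
  define O2 where "O2 H = (if N H \<bullet> x > 0 then {z. N H \<bullet> z < 0} else {z. N H \<bullet> z > 0})" for H
  have openO1: "open (O1 H)" for H by (simp add: O1_def open_halfspace_gt open_halfspace_lt)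
  have openO2: "open (O2 H)" for H by (simp add: O2_def open_halfspace_gt open_halfspace_lt)
  have Ceq: "?C = (\<Inter>H\<in>A. O1 H)"
  proof
    show "?C \<subseteq> (\<Inter>H\<in>A. O1 H)"
    proof
      fix z assume z: "z \<in> ?C"
      have "z \<in> O1 H" if H: "H \<in> A" for H
      proof -
        have "sgn (N H \<bullet> z) = sgn (N H \<bullet> x)" "N H \<bullet> x \<noteq> 0" using cl_sgn[OF z H] x H by auto
        then show ?thesis by (cases "N H \<bullet> x > 0") (auto simp: O1_def sgn_real_def split: if_splits)
      qed
      then show "z \<in> (\<Inter>H\<in>A. O1 H)" by blast
    qed
  next
    show "(\<Inter>H\<in>A. O1 H) \<subseteq> ?C"
    proof
      fix z assume z: "z \<in> (\<Inter>H\<in>A. O1 H)"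
      have "sgn (N H \<bullet> z) = sgn (N H \<bullet> x)" if H: "H \<in> A" for H
      proof -
        have "z \<in> O1 H" "N H \<bullet> x \<noteq> 0" using z H x by auto
        then show ?thesis by (cases "N H \<bullet> x > 0") (auto simp: O1_def sgn_real_def)
      qed
      then show "z \<in> ?C" by (simp add: cl_def)
    qed
  qed
  have openC: "open ?C" unfolding Ceq using fA openO1 by blast
  have CS: "?C \<subseteq> ?S"
  proof
    fix z assume z: "z \<in> ?C"
    have "z \<notin> H" if H: "H \<in> A" for H
    proof -
      have "sgn (N H \<bullet> z) = sgn (N H \<bullet> x)" using cl_sgn[OF z H] .
      then have "N H \<bullet> z \<noteq> 0" using x H by (metis sgn_0_0)
      then show ?thesis using hyp[OF H] by blast
    qed
    then show "z \<in> ?S" by blast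
  qed
  have xC: "x \<in> ?C" by (simp add: cl_self)
  show ?thesis
  proof
    show "?C \<subseteq> connected_component_set ?S x"
      by (rule connected_component_maximal[OF xC convex_connected[OF cl_convex[OF subspace_UNIV]] CS])
  next
    let ?K = "connected_component_set ?S x"
    let ?D = "\<Union>H\<in>A. O2 H"
    have openD: "open ?D" using openO2 by blast
    have disj: "?C \<inter> ?D \<inter> ?K = {}"
    proof -
      have "False" if z: "z \<in> ?C" "z \<in> O2 H" "H \<in> A" for z H
        using cl_sgn[OF z(1) z(3)] z(2) x z(3) by (auto simp: O2_def sgn_real_def split: if_splits)
      then show ?thesis by blast
    qed
    have cover: "?K \<subseteq> ?C \<union> ?D"
    proof
      fix z assume "z \<in> ?K"
      then have zS: "z \<in> ?S" using connected_component_subset by blast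
      have znz: "N H \<bullet> z \<noteq> 0" if H: "H \<in> A" for H
        using zS hyp[OF H] H by blast
      show "z \<in> ?C \<union> ?D"
      proof (cases "\<forall>H\<in>A. sgn (N H \<bullet> z) = sgn (N H \<bullet> x)")
        case True then show ?thesis by (simp add: cl_def)
      next
        case False
        then obtain H where H: "H \<in> A" "sgn (N H \<bullet> z) \<noteq> sgn (N H \<bullet> x)" by blast
        then have "z \<in> O2 H" using znz[OF H(1)] x
          by (auto simp: O2_def sgn_real_def split: if_splits)
        then show ?thesis using H(1) by blast
      qed
    qed
    have "?C \<inter> ?K = {} \<or> ?D \<inter> ?K = {}"
      by (rule connectedD[OF connected_connected_component openC openD disj cover])
    moreover have "x \<in> ?S" using xC CS by blast
    then have "x \<in> ?K" by (simp add: connected_component_refl)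
    ultimately have "?D \<inter> ?K = {}" using xC by blast
    then show "?K \<subseteq> ?C" using cover by blast
  qed
qed



definition nrm :: "'a::euclidean_space set \<Rightarrow> 'a" where
  "nrm H = (SOME a. a \<noteq> 0 \<and> H = {x. a \<bullet> x = 0})"

lemma nrm:
  assumes "arrangement A" "H \<in> A"
  shows "nrm H \<noteq> 0" "H = {x. nrm H \<bullet> x = 0}"
proof -
  have "\<exists>a. a \<noteq> 0 \<and> H = {x. a \<bullet> x = 0}" using assms by (auto simp: arrangement_def lin_hyperplane_def)
  then have "nrm H \<noteq> 0 \<and> H = {x. nrm H \<bullet> x = 0}" unfolding nrm_def by (rule someI_ex)
  then show "nrm H \<noteq> 0" "H = {x. nrm H \<bullet> x = 0}" by auto
qed

lemma mem_hyp: "arrangement A \<Longrightarrow> H \<in> A \<Longrightarrow> (z \<in> H) = (nrm H \<bullet> z = 0)"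
  using nrm(2) by blast

lemma generic_point:
  assumes A: "arrangement A"
  shows "\<exists>w0. \<forall>H\<in>A. nrm H \<bullet> w0 \<noteq> 0"
proof -
  have fA: "finite A" using A by (simp add: arrangement_def)
  have "negligible (\<Union>A)"
  proof (rule negligible_Union[OF fA])
    fix H assume H: "H \<in> A"
    show "negligible H" using negligible_hyperplane[of "nrm H" 0] nrm[OF A H] by simp
  qed
  moreover have "\<not> negligible (UNIV :: 'a set)"
    using negligible_convex_interior[of "UNIV :: 'a set"] by simp
  ultimately have "\<Union>A \<noteq> UNIV" by auto
  then obtain w0 where "w0 \<notin> \<Union>A" by blast
  then show ?thesis using mem_hyp[OF A] by blast
qed

lemma regions_Kc:
  assumes A: "arrangement A"
  shows "regions A = {Kc nrm A x | x. \<forall>H\<in>A. nrm H \<bullet> x \<noteq> 0}"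
proof -
  have fA: "finite A" using A by (simp add: arrangement_def)
  have ex: "(x \<notin> \<Union>A) = (\<forall>H\<in>A. nrm H \<bullet> x \<noteq> 0)" for x using mem_hyp[OF A] by blast
  have cc: "closure (connected_component_set (- \<Union>A) x) = Kc nrm A x" if "\<forall>H\<in>A. nrm H \<bullet> x \<noteq> 0" for x
  proof -
    have "connected_component_set (- \<Union>A) x = cl nrm A UNIV x"
      by (rule component_cl[OF fA that nrm(2)[OF A]])
    then show ?thesis by (simp add: closure_cl)
  qed
  show ?thesis
  proof
    show "regions A \<subseteq> {Kc nrm A x | x. \<forall>H\<in>A. nrm H \<bullet> x \<noteq> 0}"
    proof
      fix R assume "R \<in> regions A"
      then obtain x where x: "x \<notin> \<Union>A" "R = closure (connected_component_set (- \<Union>A) x)"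
        unfolding regions_def by blast
      then have x': "\<forall>H\<in>A. nrm H \<bullet> x \<noteq> 0" using ex by blast
      then have "R = Kc nrm A x" using cc x(2) by simp
      then show "R \<in> {Kc nrm A x | x. \<forall>H\<in>A. nrm H \<bullet> x \<noteq> 0}" using x' by blast
    qed
  next
    show "{Kc nrm A x | x. \<forall>H\<in>A. nrm H \<bullet> x \<noteq> 0} \<subseteq> regions A"
    proof
      fix R assume "R \<in> {Kc nrm A x | x. \<forall>H\<in>A. nrm H \<bullet> x \<noteq> 0}"
      then obtain x where x: "\<forall>H\<in>A. nrm H \<bullet> x \<noteq> 0" "R = Kc nrm A x" by blast
      then have "x \<notin> \<Union>A" using ex by blast
      moreover have "R = closure (connected_component_set (- \<Union>A) x)" using cc[OF x(1)] x(2) by simp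
      ultimately show "R \<in> regions A" unfolding regions_def by blast
    qed
  qed
qed

lemma faces_Kc:
  assumes A: "arrangement A"
  shows "faces A = range (Kc nrm A)"
proof -
  have fA: "finite A" using A by (simp add: arrangement_def)
  show ?thesis
  proof
    show "faces A \<subseteq> range (Kc nrm A)"
    proof
      fix F assume "F \<in> faces A"
      then obtain R where R: "R \<in> regions A" "F face_of R" "F \<noteq> {}" by (auto simp: faces_def)
      then obtain x where x: "\<forall>H\<in>A. nrm H \<bullet> x \<noteq> 0" "R = Kc nrm A x" using regions_Kc[OF A] by auto
      show "F \<in> range (Kc nrm A)" using face_is_cell[OF fA x(1)] R x(2) by blast
    qed
  next
    show "range (Kc nrm A) \<subseteq> faces A"
    proof
      fix F assume "F \<in> range (Kc nrm A)"
      then obtain y where y: "F = Kc nrm A y" by blast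
      obtain w0 where w0: "\<forall>H\<in>A. nrm H \<bullet> w0 \<noteq> 0" using generic_point[OF A] by blast
      obtain x where x: "\<forall>H\<in>A. nrm H \<bullet> x \<noteq> 0" "Kc nrm A y face_of Kc nrm A x"
        using cell_is_face[OF fA w0] by blast
      have "y \<in> Kc nrm A y" using cl_sub_Kc[of nrm A UNIV y] cl_self[of y UNIV nrm A] by blast
      moreover have "Kc nrm A x \<in> regions A" using regions_Kc[OF A] x(1) by blast
      ultimately show "F \<in> faces A" using x(2) y by (auto simp: faces_def)
    qed
  qed
qed

lemma Kc_inj:
  assumes "Kc N A y1 = Kc N A y2"
  shows "cl N A UNIV y1 = cl N A UNIV y2"
proof -
  have y1: "y1 \<in> Kc N A y2" and y2: "y2 \<in> Kc N A y1"
    using assms cl_sub_Kc[of N A UNIV] cl_self[of _ UNIV N A] by blast+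
  have "sgn (N H \<bullet> y1) = sgn (N H \<bullet> y2)" if H: "H \<in> A" for H
  proof -
    have a: "(N H \<bullet> y2 = 0 \<longrightarrow> N H \<bullet> y1 = 0) \<and> (N H \<bullet> y2 > 0 \<longrightarrow> N H \<bullet> y1 \<ge> 0) \<and> (N H \<bullet> y2 < 0 \<longrightarrow> N H \<bullet> y1 \<le> 0)"
      by (rule Kc_memD[OF y1 H])
    have b: "(N H \<bullet> y1 = 0 \<longrightarrow> N H \<bullet> y2 = 0) \<and> (N H \<bullet> y1 > 0 \<longrightarrow> N H \<bullet> y2 \<ge> 0) \<and> (N H \<bullet> y1 < 0 \<longrightarrow> N H \<bullet> y2 \<le> 0)"
      by (rule Kc_memD[OF y2 H])
    consider "N H \<bullet> y2 = 0" | "N H \<bullet> y2 > 0" | "N H \<bullet> y2 < 0" by linarith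
    then show ?thesis
    proof cases
      case 1 then show ?thesis using a by simp
    next
      case 2 then have "N H \<bullet> y1 > 0" using a b by force
      then show ?thesis using 2 by simp
    next
      case 3 then have "N H \<bullet> y1 < 0" using a b by force
      then show ?thesis using 3 by simp
    qed
  qed
  then show ?thesis unfolding cl_def by auto
qed

lemma faces_in_eq:
  assumes A: "arrangement A"
  shows "f_poly (faces_in A {z. a \<bullet> z \<ge> 0}) t = (\<Sum>C\<in>{C\<in>cells nrm A UNIV. C \<subseteq> {z. a \<bullet> z \<ge> 0}}. t ^ dim C)"
proof -
  let ?h = "{z. a \<bullet> z \<ge> 0}"
  let ?S = "{C\<in>cells nrm A UNIV. C \<subseteq> ?h}"
  have "range (Kc nrm A) = closure ` (cl nrm A UNIV ` UNIV)"
    by (simp add: image_image closure_cl)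
  then have fa: "faces A = closure ` cells nrm A UNIV"
    unfolding faces_Kc[OF A] cells_def .
  have cl_h: "closure C \<subseteq> ?h \<longleftrightarrow> C \<subseteq> ?h" for C
  proof
    assume "closure C \<subseteq> ?h" then show "C \<subseteq> ?h" using closure_subset[of C] by blast
  next
    assume "C \<subseteq> ?h" then show "closure C \<subseteq> ?h" using closed_halfspace_ge[of 0 a] by (rule closure_minimal)
  qed
  have eq: "faces_in A ?h = closure ` ?S"
    unfolding faces_in_def fa using cl_h by auto
  have inj: "inj_on closure ?S"
  proof (rule inj_onI)
    fix C D assume C: "C \<in> ?S" and D: "D \<in> ?S" and e: "closure C = closure D"
    obtain y1 y2 where "C = cl nrm A UNIV y1" "D = cl nrm A UNIV y2" using C D by (auto simp: cells_def)
    moreover have "Kc nrm A y1 = Kc nrm A y2" using e calculation by (simp add: closure_cl)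
    ultimately show "C = D" using Kc_inj[of nrm A y1 y2] by simp
  qed
  show ?thesis unfolding f_poly_def eq sum.reindex[OF inj] by simp
qed



lemma span_cell:
  assumes A: "arrangement A"
  shows "span (cl nrm A UNIV y) = \<Inter>{H\<in>A. y \<in> H}"
proof -
  have fA: "finite A" using A by (simp add: arrangement_def)
  have "span (cl nrm A UNIV y) = Lsp nrm A UNIV y" by (rule span_cl[OF fA subspace_UNIV UNIV_I])
  also have "\<dots> = \<Inter>{H\<in>A. y \<in> H}"
    unfolding Lsp_def using mem_hyp[OF A] by auto
  finally show ?thesis .
qed

lemma flat_subspace:
  assumes A: "arrangement A" and X: "X \<in> flats A"
  shows "subspace X"
proof -
  obtain B where B: "B \<subseteq> A" "X = \<Inter>B" using X by (auto simp: flats_def)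
  have "\<forall>H\<in>B. subspace H" using B(1) nrm(2)[OF A] subspace_hyperplane by (metis subsetD)
  then show ?thesis using B(2) by (simp add: subspace_Inter)
qed

lemma finite_flats: "arrangement A \<Longrightarrow> finite (flats A)"
proof -
  assume "arrangement A"
  then have "finite (Pow A)" by (simp add: arrangement_def)
  moreover have "flats A = Inter ` Pow A" by (auto simp: flats_def)
  ultimately show ?thesis by simp
qed

lemma bot_in_flats: "bot_flat A \<in> flats A"
  by (auto simp: flats_def bot_flat_def)

lemma bot_sub: "X \<in> flats A \<Longrightarrow> bot_flat A \<subseteq> X"
  by (auto simp: flats_def bot_flat_def)

lemma span_cell_flat:
  assumes A: "arrangement A" and C: "C \<in> cells nrm A UNIV"
  shows "span C \<in> flats A"
proof -
  obtain y where "C = cl nrm A UNIV y" using C by (auto simp: cells_def)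
  then show ?thesis using span_cell[OF A, of y] by (auto simp: flats_def)
qed

lemma cells_in_flat:
  assumes A: "arrangement A" and X: "X \<in> flats A"
  shows "cells nrm A X = {C\<in>cells nrm A UNIV. C \<subseteq> X}"
proof -
  obtain B where B: "B \<subseteq> A" "X = \<Inter>B" using X by (auto simp: flats_def)
  have sub: "cl nrm A UNIV x \<subseteq> X" if x: "x \<in> X" for x
  proof
    fix z assume z: "z \<in> cl nrm A UNIV x"
    have "z \<in> H" if H: "H \<in> B" for H
    proof -
      have HA: "H \<in> A" using H B(1) by blast
      have "x \<in> H" using x B H by blast
      then have "nrm H \<bullet> x = 0" using mem_hyp[OF A HA] by simp
      then have "nrm H \<bullet> z = 0" using cl_zero[OF z HA] by simp
      then show ?thesis using mem_hyp[OF A HA] by simp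
    qed
    then show "z \<in> X" using B(2) by blast
  qed
  have eqc: "cl nrm A X x = cl nrm A UNIV x" if x: "x \<in> X" for x
    using sub[OF x] unfolding cl_def by auto
  show ?thesis
  proof
    show "cells nrm A X \<subseteq> {C\<in>cells nrm A UNIV. C \<subseteq> X}"
      unfolding cells_def using eqc sub by auto
  next
    show "{C\<in>cells nrm A UNIV. C \<subseteq> X} \<subseteq> cells nrm A X"
    proof
      fix C assume C: "C \<in> {C\<in>cells nrm A UNIV. C \<subseteq> X}"
      then obtain y where y: "C = cl nrm A UNIV y" by (auto simp: cells_def)
      then have "y \<in> X" using C cl_self[of y UNIV nrm A] by blast
      then show "C \<in> cells nrm A X" unfolding cells_def using eqc y by blast
    qed
  qed
qed

definition cnt :: "'a::euclidean_space set set \<Rightarrow> 'a \<Rightarrow> 'a set \<Rightarrow> nat" where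
  "cnt A a Y = card {C\<in>cells nrm A UNIV. C \<subseteq> {z. a \<bullet> z \<ge> 0} \<and> span C = Y}"

lemma group_flat:
  assumes A: "arrangement A" and X: "X \<in> flats A"
  shows "(\<Sum>C\<in>{C\<in>cells nrm A UNIV. C \<subseteq> X}. eul a C) = (\<Sum>Y\<in>{Y\<in>flats A. Y \<subseteq> X}. (-1) ^ dim Y * int (cnt A a Y))"
proof -
  have fA: "finite A" using A by (simp add: arrangement_def)
  let ?cA = "cells nrm A UNIV"
  let ?S = "{C\<in>?cA. C \<subseteq> X}"
  let ?T = "{Y\<in>flats A. Y \<subseteq> X}"
  let ?h = "{z. a \<bullet> z \<ge> 0}"
  have fcA: "finite ?cA" by (rule finite_cells[OF fA])
  have fS: "finite ?S" using fcA by simp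
  have fT: "finite ?T" using finite_flats[OF A] by simp
  have sX: "subspace X" by (rule flat_subspace[OF A X])
  have img: "span ` ?S \<subseteq> ?T"
  proof
    fix Y assume "Y \<in> span ` ?S"
    then obtain C where C: "C \<in> ?S" "Y = span C" by blast
    have "span C \<subseteq> X" using C(1) sX by (simp add: span_minimal)
    then show "Y \<in> ?T" using span_cell_flat[OF A] C by auto
  qed
  have "(\<Sum>C\<in>?S. eul a C) = (\<Sum>Y\<in>?T. sum (eul a) {C \<in> ?S. span C = Y})"
    using sum.group[OF fS fT img, of "eul a"] by simp
  also have "\<dots> = (\<Sum>Y\<in>?T. (-1) ^ dim Y * int (cnt A a Y))"
  proof (rule sum.cong[OF refl])
    fix Y assume Y: "Y \<in> ?T"
    have eqS: "{C \<in> ?S. span C = Y} = {C\<in>?cA. span C = Y}"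
    proof -
      have "C \<subseteq> X" if "span C = Y" for C using that Y span_superset[of C] by blast
      then show ?thesis by blast
    qed
    have "sum (eul a) {C\<in>?cA. span C = Y} = (\<Sum>C\<in>{C\<in>?cA. span C = Y}. if C \<subseteq> ?h then (-1) ^ dim Y else 0)"
    proof (rule sum.cong[OF refl])
      fix C assume "C \<in> {C\<in>?cA. span C = Y}"
      then have "dim C = dim Y" using dim_span[of C] by simp
      then show "eul a C = (if C \<subseteq> ?h then (-1) ^ dim Y else 0)" by (simp add: eul_def)
    qed
    also have "\<dots> = (\<Sum>C\<in>{C\<in>{C\<in>?cA. span C = Y}. C \<subseteq> ?h}. (-1) ^ dim Y)"
    proof -
      have fF: "finite {C\<in>?cA. span C = Y}" using fcA by simp
      show ?thesis by (simp only: sum.inter_filter[OF fF])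
    qed
    also have "{C\<in>{C\<in>?cA. span C = Y}. C \<subseteq> ?h} = {C\<in>?cA. C \<subseteq> ?h \<and> span C = Y}" by auto
    finally show "sum (eul a) {C \<in> ?S. span C = Y} = (-1) ^ dim Y * int (cnt A a Y)"
      unfolding eqS cnt_def by simp
  qed
  finally show ?thesis .
qed



lemma bot_cell: "arrangement A \<Longrightarrow> cl nrm A UNIV 0 = bot_flat A"
  unfolding cl_def bot_flat_def using mem_hyp[of A] by (auto simp: sgn_0_0)

lemma cnt_bot:
  assumes A: "arrangement A" and gen: "generic_hyperplane A {x. a \<bullet> x = 0}"
  shows "cnt A a (bot_flat A) = 1"
proof -
  let ?cA = "cells nrm A UNIV"
  let ?h = "{z. a \<bullet> z \<ge> 0}"
  have bc: "bot_flat A \<in> ?cA" using bot_cell[OF A] by (auto simp: cells_def)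
  have bh: "bot_flat A \<subseteq> ?h" using gen by (auto simp: generic_hyperplane_def)
  have sb: "subspace (bot_flat A)" by (rule flat_subspace[OF A bot_in_flats])
  have spb: "span (bot_flat A) = bot_flat A" using sb by (simp add: span_eq_iff)
  have "{C\<in>?cA. C \<subseteq> ?h \<and> span C = bot_flat A} = {bot_flat A}"
  proof
    show "{C\<in>?cA. C \<subseteq> ?h \<and> span C = bot_flat A} \<subseteq> {bot_flat A}"
    proof
      fix C assume C: "C \<in> {C\<in>?cA. C \<subseteq> ?h \<and> span C = bot_flat A}"
      then obtain y where y: "C = cl nrm A UNIV y" by (auto simp: cells_def)
      have "y \<in> C" using y cl_self[of y UNIV nrm A] by simp
      then have "y \<in> bot_flat A" using C span_superset[of C] by auto
      then have "y \<in> cl nrm A UNIV 0" using bot_cell[OF A] by simp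
      then have "C = cl nrm A UNIV 0" using y cl_eq by metis
      then show "C \<in> {bot_flat A}" using bot_cell[OF A] by simp
    qed
  next
    show "{bot_flat A} \<subseteq> {C\<in>?cA. C \<subseteq> ?h \<and> span C = bot_flat A}" using bc bh spb by auto
  qed
  then show ?thesis unfolding cnt_def by simp
qed

lemma euler_flat:
  assumes A: "arrangement A" and gen: "generic_hyperplane A {x. a \<bullet> x = 0}"
    and X: "X \<in> flats A" "X \<noteq> bot_flat A"
  shows "(\<Sum>C\<in>{C\<in>cells nrm A UNIV. C \<subseteq> X}. eul a C) = 0"
proof -
  have fA: "finite A" using A by (simp add: arrangement_def)
  have sX: "subspace X" by (rule flat_subspace[OF A X(1)])
  have "\<not> X \<subseteq> {x. a \<bullet> x = 0}" using gen X by (auto simp: generic_hyperplane_def)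
  then obtain v where v: "v \<in> X" "a \<bullet> v \<noteq> 0" by blast
  obtain v' where v': "v' \<in> X" "a \<bullet> v' < 0"
  proof (cases "a \<bullet> v < 0")
    case True then show ?thesis using that v by blast
  next
    case False
    then have "a \<bullet> (- v) < 0" using v(2) by simp
    then show ?thesis using that subspace_neg[OF sX v(1)] by blast
  qed
  show ?thesis using euler[OF fA sX v', of nrm] cells_in_flat[OF A X(1)] by simp
qed

lemma mob_count:
  assumes A: "arrangement A" and gen: "generic_hyperplane A {x. a \<bullet> x = 0}"
    and X: "X \<in> flats A"
  shows "(-1) ^ dim X * int (cnt A a X) = (-1) ^ dim (bot_flat A) * mobius (flats A) (bot_flat A) X"
proof -
  let ?L = "flats A"
  let ?b = "bot_flat A"
  have fL: "finite ?L" by (rule finite_flats[OF A])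
  have main: "\<forall>X. card {Y\<in>?L. Y \<subset> X} = n \<longrightarrow> X \<in> ?L \<longrightarrow>
      (-1) ^ dim X * int (cnt A a X) = (-1) ^ dim ?b * mobius ?L ?b X" for n
  proof (induction n rule: less_induct)
    case (less n)
    show ?case
    proof (intro allI impI)
      fix X assume n: "card {Y\<in>?L. Y \<subset> X} = n" and X: "X \<in> ?L"
      show "(-1) ^ dim X * int (cnt A a X) = (-1) ^ dim ?b * mobius ?L ?b X"
      proof (cases "X = ?b")
        case True
        have "mobius ?L ?b ?b = 1" using fL bot_in_flats[of A] by (simp add: mobius.simps)
        then show ?thesis using True cnt_bot[OF A gen] by simp
      next
        case False
        have IH: "(-1) ^ dim Y * int (cnt A a Y) = (-1) ^ dim ?b * mobius ?L ?b Y"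
          if Y: "Y \<in> ?L" "Y \<subset> X" for Y
        proof -
          have "{Z\<in>?L. Z \<subset> Y} \<subset> {Z\<in>?L. Z \<subset> X}" using Y by auto
          moreover have "finite {Z\<in>?L. Z \<subset> X}" using fL by simp
          ultimately have "card {Z\<in>?L. Z \<subset> Y} < card {Z\<in>?L. Z \<subset> X}" by (metis psubset_card_mono)
          then have "card {Z\<in>?L. Z \<subset> Y} < n" using n by simp
          then show ?thesis using less Y(1) by blast
        qed
        have e0: "(\<Sum>Y\<in>{Y\<in>?L. Y \<subseteq> X}. (-1) ^ dim Y * int (cnt A a Y)) = 0"
          using group_flat[OF A X, of a] euler_flat[OF A gen X False] by simp
        have ins: "{Y\<in>?L. Y \<subseteq> X} = insert X {Y\<in>?L. Y \<subset> X}" using X by auto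
        have fS: "finite {Y\<in>?L. Y \<subset> X}" using fL by simp
        have "(-1) ^ dim X * int (cnt A a X) = - (\<Sum>Y\<in>{Y\<in>?L. Y \<subset> X}. (-1) ^ dim Y * int (cnt A a Y))"
          using e0 unfolding ins using fS by (simp add: sum.insert)
        also have "\<dots> = - (\<Sum>Y\<in>{Y\<in>?L. Y \<subset> X}. (-1) ^ dim ?b * mobius ?L ?b Y)"
          using IH by simp
        also have "\<dots> = (-1) ^ dim ?b * (- (\<Sum>Y\<in>{Y\<in>?L. Y \<subset> X}. mobius ?L ?b Y))"
          by (simp add: sum_distrib_left)
        also have "- (\<Sum>Y\<in>{Y\<in>?L. Y \<subset> X}. mobius ?L ?b Y) = mobius ?L ?b X"
        proof -
          have eqs: "{z\<in>?L. ?b \<subseteq> z \<and> z \<subset> X} = {Y\<in>?L. Y \<subset> X}" using bot_sub[of _ A] by blast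
          have "mobius ?L ?b X = - (\<Sum>z\<in>{z\<in>?L. ?b \<subseteq> z \<and> z \<subset> X}. mobius ?L ?b z)"
            using fL bot_in_flats[of A] X bot_sub[OF X] False by (subst mobius.simps) simp
          then show ?thesis unfolding eqs by simp
        qed
        finally show ?thesis .
      qed
    qed
  qed
  then show ?thesis using X by blast
qed



lemma power_cancel_aux:
  fixes w :: real
  assumes "w \<noteq> 0" "d \<le> n"
  shows "w ^ n * (1 / w) ^ d = w ^ (n - d)"
proof -
  have "w ^ n = w ^ (n - d) * w ^ d" using assms(2) by (simp add: power_add[symmetric])
  moreover have "w ^ d * (1 / w) ^ d = 1" using assms(1) by (simp add: power_mult_distrib[symmetric])
  ultimately show ?thesis by (simp add: mult.assoc)
qed

theorem proposition3p1:
  fixes A :: "'a::euclidean_space set set" and h :: "'a set"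
  assumes "arrangement A" and "A \<noteq> {}" and "simplicial A"
    and "generic_halfspace A h"
  shows "\<forall>z::real. z \<noteq> 0 \<and> z \<noteq> 1 \<longrightarrow>
           prim_eulerian A z = z ^ DIM('a) * h_poly (faces_in A h) (1 / z)"
proof -
  have A: "arrangement A" by fact
  have fA: "finite A" using A by (simp add: arrangement_def)
  obtain a c where a: "a \<noteq> 0" and hdef: "h = {x. a \<bullet> x \<ge> c}" and gen0: "generic_hyperplane A {x. a \<bullet> x = c}"
    using assms(4) by (auto simp: generic_halfspace_def)
  have "0 \<in> bot_flat A" unfolding bot_flat_def using mem_hyp[OF A] by auto
  then have "c = 0" using gen0 by (auto simp: generic_hyperplane_def)
  then have h: "h = {x. a \<bullet> x \<ge> 0}" and gen: "generic_hyperplane A {x. a \<bullet> x = 0}"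
    using hdef gen0 by auto
  let ?n = "DIM('a)"
  let ?cA = "cells nrm A UNIV"
  let ?S = "{C\<in>?cA. C \<subseteq> {x. a \<bullet> x \<ge> 0}}"
  have fcA: "finite ?cA" by (rule finite_cells[OF fA])
  have fS: "finite ?S" using fcA by simp
  have fL: "finite (flats A)" by (rule finite_flats[OF A])
  have absmu: "real_of_int \<bar>mobius (flats A) (bot_flat A) X\<bar> = real (cnt A a X)" if X: "X \<in> flats A" for X
  proof -
    have "\<bar>(-1::int) ^ dim X * int (cnt A a X)\<bar> = \<bar>(-1) ^ dim (bot_flat A) * mobius (flats A) (bot_flat A) X\<bar>"
      using mob_count[OF A gen X] by simp
    then have "int (cnt A a X) = \<bar>mobius (flats A) (bot_flat A) X\<bar>" by (simp add: abs_mult)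
    then show ?thesis by (metis of_int_of_nat_eq)
  qed
  have grp: "(\<Sum>C\<in>?S. w ^ (?n - dim C)) = (\<Sum>X\<in>flats A. real (cnt A a X) * w ^ (?n - dim X))" for w :: real
  proof -
    have img: "span ` ?S \<subseteq> flats A" using span_cell_flat[OF A] by auto
    have "(\<Sum>C\<in>?S. w ^ (?n - dim C)) = (\<Sum>X\<in>flats A. \<Sum>C\<in>{C\<in>?S. span C = X}. w ^ (?n - dim C))"
      using sum.group[OF fS fL img, of "\<lambda>C. w ^ (?n - dim C)"] by simp
    also have "\<dots> = (\<Sum>X\<in>flats A. real (cnt A a X) * w ^ (?n - dim X))"
    proof (rule sum.cong[OF refl])
      fix X assume "X \<in> flats A"
      have "(\<Sum>C\<in>{C\<in>?S. span C = X}. w ^ (?n - dim C)) = (\<Sum>C\<in>{C\<in>?S. span C = X}. w ^ (?n - dim X))"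
      proof (rule sum.cong[OF refl])
        fix C assume "C \<in> {C\<in>?S. span C = X}"
        then have "dim C = dim X" using dim_span[of C] by simp
        then show "w ^ (?n - dim C) = w ^ (?n - dim X)" by simp
      qed
      also have "\<dots> = real (card {C\<in>?S. span C = X}) * w ^ (?n - dim X)" by simp
      finally have fin: "(\<Sum>C\<in>{C\<in>?S. span C = X}. w ^ (?n - dim C)) = real (card {C\<in>?S. span C = X}) * w ^ (?n - dim X)" .
      have eqset: "{C\<in>?S. span C = X} = {C\<in>?cA. C \<subseteq> {z. a \<bullet> z \<ge> 0} \<and> span C = X}" by auto
      show "(\<Sum>C\<in>{C\<in>?S. span C = X}. w ^ (?n - dim C)) = real (cnt A a X) * w ^ (?n - dim X)"
        using fin unfolding cnt_def eqset .
    qed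
    finally show ?thesis .
  qed
  show ?thesis
  proof (intro allI impI)
    fix z :: real assume z: "z \<noteq> 0 \<and> z \<noteq> 1"
    have w: "z - 1 \<noteq> 0" using z by simp
    have t: "(1 / z) / (1 - 1 / z) = 1 / (z - 1)" using z by (simp add: field_simps)
    have zz: "z ^ ?n * (1 - 1 / z) ^ ?n = (z - 1) ^ ?n"
      using z by (simp add: power_mult_distrib[symmetric] field_simps)
    have "z ^ ?n * h_poly (faces_in A h) (1 / z) = (z - 1) ^ ?n * (\<Sum>C\<in>?S. (1 / (z - 1)) ^ dim C)"
      unfolding h_poly_def h faces_in_eq[OF A] t using zz by (simp add: mult.assoc[symmetric])
    also have "\<dots> = (\<Sum>C\<in>?S. (z - 1) ^ (?n - dim C))"
      unfolding sum_distrib_left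
    proof (rule sum.cong[OF refl])
      fix C :: "'a set"
      have "dim C \<le> ?n" by (rule dim_subset_UNIV)
      then show "(z - 1) ^ ?n * (1 / (z - 1)) ^ dim C = (z - 1) ^ (?n - dim C)"
        by (rule power_cancel_aux[OF w])
    qed
    also have "\<dots> = (\<Sum>X\<in>flats A. real (cnt A a X) * (z - 1) ^ (?n - dim X))" by (rule grp)
    also have "\<dots> = prim_eulerian A z"
      unfolding prim_eulerian_def codim_def using absmu by (intro sum.cong) auto
    finally show "prim_eulerian A z = z ^ ?n * h_poly (faces_in A h) (1 / z)" by simp
  qed
qed


end
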